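(* There exists a $(697,25)$-arc in $\operatorname{PG}(2,29)$; hence $m_{25}(2,29)\ge 697$.
   Context: Points of $\operatorname{PG}(2,q)$ are the 1-dimensional subspaces of $\operatorname{GF}(q)^3$, lines are the 2-dimensional subspaces. An $(n,r)$-arc in $\operatorname{PG}(2,q)$ is a set $\mathcal B$ of $n$ points such that every line contains at most $r$ points of $\mathcal B$ and at least one line contains exactly $r$ points of $\mathcal B$. $m_r(2,q)$ is the maximum $n$ for which an $(n,r)$-arc in $\operatorname{PG}(2,q)$ exists. *)

theory Defs
  imports "HOL-Analysis.Analysis"
begin

text \<open>For F = GF(q) we take an arbitrary finite
  field type with q elements.\<close>

definition pg_points :: "('a::field ^ 3) set set" where
  "pg_points = {S. vec.subspace S \<and> vec.dim S = 1}"

definition pg_lines :: "('a::field ^ 3) set set" where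
  "pg_lines = {S. vec.subspace S \<and> vec.dim S = 2}"

definition is_arc :: "nat \<Rightarrow> nat \<Rightarrow> ('a::field ^ 3) set set \<Rightarrow> bool" where
  "is_arc n r B \<longleftrightarrow>
     B \<subseteq> pg_points \<and> finite B \<and> card B = n \<and>
     (\<forall>L\<in>pg_lines. card {P\<in>B. P \<subseteq> L} \<le> r) \<and>
     (\<exists>L\<in>pg_lines. card {P\<in>B. P \<subseteq> L} = r)"

definition m_arc :: "'a::field itself \<Rightarrow> nat \<Rightarrow> nat" where
  "m_arc _ r = Max {n. \<exists>B :: ('a ^ 3) set set. is_arc n r B}"

end

theory Submission imports Defs begin
lemma up29: "[0..<29] = [0, 1, 2, 3, 4, 5, 6, 7, 8, 9, 10, 11, 12, 13, 14, 15, 16, 17, 18, 19, 20, 21, 22, 23, 24, 25, 26, 27, 28::nat]" by (simp add: upt_conv_Cons)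
definition Krow :: "nat \<Rightarrow> nat set" where
  "Krow j = (if j = 0 then {5, 15, 18, 19, 21, 22} else if j = 1 then {11, 15, 19, 23, 25, 26} else if j = 2 then {0, 2, 12, 17, 18, 23, 25} else if j = 3 then {8, 9, 10, 18, 27} else if j = 4 then {0, 2, 6, 7, 14} else if j = 5 then {2, 3, 6, 20, 23, 25} else if j = 6 then {0, 4, 10, 14, 15, 26} else if j = 7 then {3, 6, 7, 14, 26} else if j = 8 then {8, 9, 18, 21, 23, 26, 28} else if j = 9 then {10, 15, 19, 20, 22} else if j = 10 then {12, 17, 21, 26, 28} else if j = 11 then {1, 4, 14, 17, 27} else if j = 12 then {4, 5, 6, 11, 16, 24, 25} else if j = 13 then {8, 9, 10, 17, 18, 24} else if j = 14 then {5, 9, 13, 16, 20} else if j = 15 then {1, 2, 13, 17, 22} else if j = 16 then {20, 21, 22, 24, 28} else if j = 17 then {5, 9, 14, 25, 26} else if j = 18 then {0, 6, 11, 22, 27, 28} else if j = 19 then {1, 4, 7, 16, 17, 19, 27} else if j = 20 then {3, 5, 8, 16, 19, 23} else if j = 21 then {0, 5, 11, 12, 13, 23} else if j = 22 then {3, 6, 7, 10, 12, 16} else if j = 23 then {1, 7, 9, 12, 15, 20, 24} else if j = 24 then {4, 11, 16, 18, 19, 24} else if j = 25 then {1, 8, 11, 13, 24, 28} else if j = 26 then {0, 1, 2, 3, 15, 26, 27} else if j = 27 then {7, 15, 17, 21, 24} else if j = 28 then {4, 11, 13, 19, 21} else {})"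

definition Kinf :: "nat set" where "Kinf = {2, 4, 6, 18, 21, 26}"

lemma Krow_simps:
  "Krow 0 = {5, 15, 18, 19, 21, 22}"
  "Krow 1 = {11, 15, 19, 23, 25, 26}"
  "Krow (Suc 0) = {11, 15, 19, 23, 25, 26}"
  "Krow 2 = {0, 2, 12, 17, 18, 23, 25}"
  "Krow 3 = {8, 9, 10, 18, 27}"
  "Krow 4 = {0, 2, 6, 7, 14}"
  "Krow 5 = {2, 3, 6, 20, 23, 25}"
  "Krow 6 = {0, 4, 10, 14, 15, 26}"
  "Krow 7 = {3, 6, 7, 14, 26}"
  "Krow 8 = {8, 9, 18, 21, 23, 26, 28}"
  "Krow 9 = {10, 15, 19, 20, 22}"
  "Krow 10 = {12, 17, 21, 26, 28}"
  "Krow 11 = {1, 4, 14, 17, 27}"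
  "Krow 12 = {4, 5, 6, 11, 16, 24, 25}"
  "Krow 13 = {8, 9, 10, 17, 18, 24}"
  "Krow 14 = {5, 9, 13, 16, 20}"
  "Krow 15 = {1, 2, 13, 17, 22}"
  "Krow 16 = {20, 21, 22, 24, 28}"
  "Krow 17 = {5, 9, 14, 25, 26}"
  "Krow 18 = {0, 6, 11, 22, 27, 28}"
  "Krow 19 = {1, 4, 7, 16, 17, 19, 27}"
  "Krow 20 = {3, 5, 8, 16, 19, 23}"
  "Krow 21 = {0, 5, 11, 12, 13, 23}"
  "Krow 22 = {3, 6, 7, 10, 12, 16}"
  "Krow 23 = {1, 7, 9, 12, 15, 20, 24}"
  "Krow 24 = {4, 11, 16, 18, 19, 24}"
  "Krow 25 = {1, 8, 11, 13, 24, 28}"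
  "Krow 26 = {0, 1, 2, 3, 15, 26, 27}"
  "Krow 27 = {7, 15, 17, 21, 24}"
  "Krow 28 = {4, 11, 13, 19, 21}"
  by (simp_all add: Krow_def)

definition good :: "nat \<Rightarrow> nat \<Rightarrow> bool" where
  "good i k \<longleftrightarrow> 5 \<le> card {j. j < 29 \<and> (i*j+k) mod 29 \<in> Krow j} + (if i \<in> Kinf then 1 else 0)"

lemma good5:
  assumes "distinct [a,b,c,d,e]" "a < 29" "b < 29" "c < 29" "d < 29" "e < 29"
    "(i*a+k) mod 29 \<in> Krow a" "(i*b+k) mod 29 \<in> Krow b" "(i*c+k) mod 29 \<in> Krow c"
    "(i*d+k) mod 29 \<in> Krow d" "(i*e+k) mod 29 \<in> Krow e"
  shows "good i k"
proof -
  have sub: "{a,b,c,d,e} \<subseteq> {j. j < 29 \<and> (i*j+k) mod 29 \<in> Krow j}" using assms by auto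
  have fin: "finite {j. j < 29 \<and> (i*j+k) mod 29 \<in> Krow j}" by simp
  have "card {a,b,c,d,e} = 5" using assms(1) by simp
  with card_mono[OF fin sub] show ?thesis unfolding good_def by simp
qed

lemma good4:
  assumes "i \<in> Kinf" "distinct [a,b,c,d]" "a < 29" "b < 29" "c < 29" "d < 29"
    "(i*a+k) mod 29 \<in> Krow a" "(i*b+k) mod 29 \<in> Krow b" "(i*c+k) mod 29 \<in> Krow c"
    "(i*d+k) mod 29 \<in> Krow d"
  shows "good i k"
proof -
  have sub: "{a,b,c,d} \<subseteq> {j. j < 29 \<and> (i*j+k) mod 29 \<in> Krow j}" using assms by auto
  have fin: "finite {j. j < 29 \<and> (i*j+k) mod 29 \<in> Krow j}" by simp
  have "card {a,b,c,d} = 4" using assms(2) by simp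
  with card_mono[OF fin sub] show ?thesis using assms(1) unfolding good_def by simp
qed


lemma good_0_0: "good 0 0" by (rule good5[of 2 4 6 18 21]) (simp_all add: Krow_simps)

lemma good_0_1: "good 0 1" by (rule good5[of 11 15 19 23 25]) (simp_all add: Krow_simps)

lemma good_0_2: "good 0 2" by (rule good5[of 2 4 5 15 26]) (simp_all add: Krow_simps)

lemma good_0_3: "good 0 3" by (rule good5[of 5 7 20 22 26]) (simp_all add: Krow_simps)

lemma good_0_4: "good 0 4" by (rule good5[of 6 11 12 19 24]) (simp_all add: Krow_simps)

lemma good_0_5: "good 0 5" by (rule good5[of 0 12 14 17 20]) (simp_all add: Krow_simps)

lemma good_0_6: "good 0 6" by (rule good5[of 4 5 7 12 18]) (simp_all add: Krow_simps)

lemma good_0_7: "good 0 7" by (rule good5[of 4 7 19 22 23]) (simp_all add: Krow_simps)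

lemma good_0_8: "good 0 8" by (rule good5[of 3 8 13 20 25]) (simp_all add: Krow_simps)

lemma good_0_9: "good 0 9" by (rule good5[of 3 8 13 14 17]) (simp_all add: Krow_simps)

lemma good_0_10: "good 0 10" by (rule good5[of 3 6 9 13 22]) (simp_all add: Krow_simps)

lemma good_0_11: "good 0 11" by (rule good5[of 1 12 18 21 24]) (simp_all add: Krow_simps)

lemma good_0_12: "good 0 12" by (rule good5[of 2 10 21 22 23]) (simp_all add: Krow_simps)

lemma good_0_13: "good 0 13" by (rule good5[of 14 15 21 25 28]) (simp_all add: Krow_simps)

lemma good_0_14: "good 0 14" by (rule good5[of 4 6 7 11 17]) (simp_all add: Krow_simps)

lemma good_0_15: "good 0 15" by (rule good5[of 0 1 6 9 23]) (simp_all add: Krow_simps)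

lemma good_0_16: "good 0 16" by (rule good5[of 12 14 19 20 22]) (simp_all add: Krow_simps)

lemma good_0_17: "good 0 17" by (rule good5[of 2 10 11 13 15]) (simp_all add: Krow_simps)

lemma good_0_18: "good 0 18" by (rule good5[of 0 2 3 8 13]) (simp_all add: Krow_simps)

lemma good_0_19: "good 0 19" by (rule good5[of 0 1 9 19 20]) (simp_all add: Krow_simps)

lemma good_0_20: "good 0 20" by (rule good5[of 5 9 14 16 23]) (simp_all add: Krow_simps)

lemma good_0_21: "good 0 21" by (rule good5[of 0 8 10 16 27]) (simp_all add: Krow_simps)

lemma good_0_22: "good 0 22" by (rule good5[of 0 9 15 16 18]) (simp_all add: Krow_simps)

lemma good_0_23: "good 0 23" by (rule good5[of 1 2 5 8 20]) (simp_all add: Krow_simps)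

lemma good_0_24: "good 0 24" by (rule good5[of 12 13 16 23 24]) (simp_all add: Krow_simps)

lemma good_0_25: "good 0 25" by (rule good5[of 1 2 5 12 17]) (simp_all add: Krow_simps)

lemma good_0_26: "good 0 26" by (rule good5[of 1 6 7 8 10]) (simp_all add: Krow_simps)

lemma good_0_27: "good 0 27" by (rule good5[of 3 11 18 19 26]) (simp_all add: Krow_simps)

lemma good_0_28: "good 0 28" by (rule good5[of 8 10 16 18 25]) (simp_all add: Krow_simps)

lemma good_1_0: "good 1 0" by (rule good5[of 2 7 8 19 24]) (simp_all add: Krow_simps)

lemma good_1_1: "good 1 1" by (rule good5[of 5 8 9 23 26]) (simp_all add: Krow_simps)

lemma good_1_2: "good 1 2" by (rule good5[of 4 10 14 15 21]) (simp_all add: Krow_simps)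

lemma good_1_3: "good 1 3" by (rule good5[of 4 11 20 25 26]) (simp_all add: Krow_simps)

lemma good_1_4: "good 1 4" by (rule good5[of 6 12 13 16 18]) (simp_all add: Krow_simps)

lemma good_1_5: "good 1 5" by (rule good5[of 0 3 13 16 25]) (simp_all add: Krow_simps)

lemma good_1_6: "good 1 6" by (rule good5[of 3 9 11 14 16]) (simp_all add: Krow_simps)

lemma good_1_7: "good 1 7" by (rule good5[of 3 7 10 15 23]) (simp_all add: Krow_simps)

lemma good_1_8: "good 1 8" by (rule good5[of 6 16 17 19 21]) (simp_all add: Krow_simps)

lemma good_1_9: "good 1 9" by (rule good5[of 6 17 18 24 27]) (simp_all add: Krow_simps)

lemma good_1_10: "good 1 10" by (rule good5[of 1 2 4 8 9]) (simp_all add: Krow_simps)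

lemma good_1_11: "good 1 11" by (rule good5[of 9 10 13 18 19]) (simp_all add: Krow_simps)

lemma good_1_12: "good 1 12" by (rule good5[of 12 16 20 25 28]) (simp_all add: Krow_simps)

lemma good_1_13: "good 1 13" by (rule good5[of 8 9 12 21 22]) (simp_all add: Krow_simps)

lemma good_1_14: "good 1 14" by (rule good5[of 1 19 20 22 28]) (simp_all add: Krow_simps)

lemma good_1_15: "good 1 15" by (rule good5[of 0 2 3 5 8]) (simp_all add: Krow_simps)

lemma good_1_16: "good 1 16" by (rule good5[of 2 10 11 15 24]) (simp_all add: Krow_simps)

lemma good_1_17: "good 1 17" by (rule good5[of 17 18 19 20 22]) (simp_all add: Krow_simps)

lemma good_1_18: "good 1 18" by (rule good5[of 0 1 5 8 10]) (simp_all add: Krow_simps)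

lemma good_1_19: "good 1 19" by (rule good5[of 0 7 11 21 22]) (simp_all add: Krow_simps)

lemma good_1_20: "good 1 20" by (rule good5[of 5 6 8 14 21]) (simp_all add: Krow_simps)

lemma good_1_21: "good 1 21" by (rule good5[of 0 2 12 17 21]) (simp_all add: Krow_simps)

lemma good_1_22: "good 1 22" by (rule good5[of 0 1 11 12 18]) (simp_all add: Krow_simps)

lemma good_1_23: "good 1 23" by (rule good5[of 2 6 12 22 24]) (simp_all add: Krow_simps)

lemma good_1_24: "good 1 24" by (rule good5[of 1 3 13 14 24]) (simp_all add: Krow_simps)

lemma good_1_25: "good 1 25" by (rule good5[of 1 4 7 13 20]) (simp_all add: Krow_simps)

lemma good_1_26: "good 1 26" by (rule good5[of 5 13 17 19 23]) (simp_all add: Krow_simps)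

lemma good_1_27: "good 1 27" by (rule good5[of 2 4 5 6 15]) (simp_all add: Krow_simps)

lemma good_1_28: "good 1 28" by (rule good5[of 7 12 14 20 25]) (simp_all add: Krow_simps)

lemma good_2_0: "good 2 0" by (rule good4[of _ 7 12 15 17]) (simp_all add: Krow_simps Kinf_def)

lemma good_2_1: "good 2 1" by (rule good4[of _ 9 10 12 15]) (simp_all add: Krow_simps Kinf_def)

lemma good_2_2: "good 2 2" by (rule good4[of _ 3 6 8 9]) (simp_all add: Krow_simps Kinf_def)

lemma good_2_3: "good 2 3" by (rule good4[of _ 3 6 23 25]) (simp_all add: Krow_simps Kinf_def)

lemma good_2_4: "good 2 4" by (rule good4[of _ 3 9 17 18]) (simp_all add: Krow_simps Kinf_def)

lemma good_2_5: "good 2 5" by (rule good4[of _ 0 8 11 20]) (simp_all add: Krow_simps Kinf_def)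

lemma good_2_6: "good 2 6" by (rule good4[of _ 4 10 14 26]) (simp_all add: Krow_simps Kinf_def)

lemma good_2_7: "good 2 7" by (rule good4[of _ 8 19 23 25]) (simp_all add: Krow_simps Kinf_def)

lemma good_2_8: "good 2 8" by (rule good4[of _ 2 10 11 19]) (simp_all add: Krow_simps Kinf_def)

lemma good_2_9: "good 2 9" by (rule good4[of _ 1 12 17 25]) (simp_all add: Krow_simps Kinf_def)

lemma good_2_10: "good 2 10" by (rule good4[of _ 5 8 12 14]) (simp_all add: Krow_simps Kinf_def)

lemma good_2_11: "good 2 11" by (rule good4[of _ 11 12 13 27]) (simp_all add: Krow_simps Kinf_def)

lemma good_2_12: "good 2 12" by (rule good4[of _ 3 7 8 13]) (simp_all add: Krow_simps Kinf_def)

lemma good_2_13: "good 2 13" by (rule good4[of _ 1 2 5 13]) (simp_all add: Krow_simps Kinf_def)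

lemma good_2_14: "good 2 14" by (rule good4[of _ 2 6 14 24]) (simp_all add: Krow_simps Kinf_def)

lemma good_2_15: "good 2 15" by (rule good4[of _ 0 5 18 28]) (simp_all add: Krow_simps Kinf_def)

lemma good_2_16: "good 2 16" by (rule good4[of _ 12 15 21 25]) (simp_all add: Krow_simps Kinf_def)

lemma good_2_17: "good 2 17" by (rule good4[of _ 1 6 14 16]) (simp_all add: Krow_simps Kinf_def)

lemma good_2_18: "good 2 18" by (rule good4[of _ 0 7 16 19]) (simp_all add: Krow_simps Kinf_def)

lemma good_2_19: "good 2 19" by (rule good4[of _ 0 2 16 23]) (simp_all add: Krow_simps Kinf_def)

lemma good_2_20: "good 2 20" by (rule good4[of _ 13 17 18 22]) (simp_all add: Krow_simps Kinf_def)

lemma good_2_21: "good 2 21" by (rule good4[of _ 0 1 2 3]) (simp_all add: Krow_simps Kinf_def)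

lemma good_2_22: "good 2 22" by (rule good4[of _ 0 5 7 8]) (simp_all add: Krow_simps Kinf_def)

lemma good_2_23: "good 2 23" by (rule good4[of _ 1 4 20 28]) (simp_all add: Krow_simps Kinf_def)

lemma good_2_24: "good 2 24" by (rule good4[of _ 1 11 19 22]) (simp_all add: Krow_simps Kinf_def)

lemma good_2_25: "good 2 25" by (rule good4[of _ 2 5 16 27]) (simp_all add: Krow_simps Kinf_def)

lemma good_2_26: "good 2 26" by (rule good4[of _ 9 10 20 22]) (simp_all add: Krow_simps Kinf_def)

lemma good_2_27: "good 2 27" by (rule good4[of _ 2 4 6 13]) (simp_all add: Krow_simps Kinf_def)

lemma good_2_28: "good 2 28" by (rule good4[of _ 4 18 21 24]) (simp_all add: Krow_simps Kinf_def)

lemma good_3_0: "good 3 0" by (rule good5[of 3 11 13 14 21]) (simp_all add: Krow_simps)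

lemma good_3_1: "good 3 1" by (rule good5[of 3 15 16 20 23]) (simp_all add: Krow_simps)

lemma good_3_2: "good 3 2" by (rule good5[of 4 8 16 18 19]) (simp_all add: Krow_simps)

lemma good_3_3: "good 3 3" by (rule good5[of 14 16 17 18 20]) (simp_all add: Krow_simps)

lemma good_3_4: "good 3 4" by (rule good5[of 8 12 17 18 22]) (simp_all add: Krow_simps)

lemma good_3_5: "good 3 5" by (rule good5[of 0 5 7 16 19]) (simp_all add: Krow_simps)

lemma good_3_6: "good 3 6" by (rule good5[of 2 15 20 21 26]) (simp_all add: Krow_simps)

lemma good_3_7: "good 3 7" by (rule good5[of 13 14 21 25 26]) (simp_all add: Krow_simps)

lemma good_3_8: "good 3 8" by (rule good5[of 1 5 6 13 19]) (simp_all add: Krow_simps)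

lemma good_3_9: "good 3 9" by (rule good5[of 3 12 16 23 26]) (simp_all add: Krow_simps)

lemma good_3_10: "good 3 10" by (rule good5[of 5 11 18 24 26]) (simp_all add: Krow_simps)

lemma good_3_11: "good 3 11" by (rule good5[of 2 6 7 10 25]) (simp_all add: Krow_simps)

lemma good_3_12: "good 3 12" by (rule good5[of 1 2 9 17 26]) (simp_all add: Krow_simps)

lemma good_3_13: "good 3 13" by (rule good5[of 8 11 23 25 27]) (simp_all add: Krow_simps)

lemma good_3_14: "good 3 14" by (rule good5[of 7 8 13 15 20]) (simp_all add: Krow_simps)

lemma good_3_15: "good 3 15" by (rule good5[of 0 6 7 15 18]) (simp_all add: Krow_simps)

lemma good_3_16: "good 3 16" by (rule good5[of 1 5 10 17 28]) (simp_all add: Krow_simps)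

lemma good_3_17: "good 3 17" by (rule good5[of 2 4 5 9 12]) (simp_all add: Krow_simps)

lemma good_3_18: "good 3 18" by (rule good5[of 0 3 12 19 21]) (simp_all add: Krow_simps)

lemma good_3_19: "good 3 19" by (rule good5[of 0 2 4 23 24]) (simp_all add: Krow_simps)

lemma good_3_20: "good 3 20" by (rule good5[of 1 5 10 19 25]) (simp_all add: Krow_simps)

lemma good_3_21: "good 3 21" by (rule good5[of 0 6 9 14 17]) (simp_all add: Krow_simps)

lemma good_3_22: "good 3 22" by (rule good5[of 0 1 7 9 28]) (simp_all add: Krow_simps)

lemma good_3_23: "good 3 23" by (rule good5[of 1 2 4 8 11]) (simp_all add: Krow_simps)

lemma good_3_24: "good 3 24" by (rule good5[of 4 9 21 22 26]) (simp_all add: Krow_simps)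

lemma good_3_25: "good 3 25" by (rule good5[of 2 6 10 14 23]) (simp_all add: Krow_simps)

lemma good_3_26: "good 3 26" by (rule good5[of 6 8 11 12 15]) (simp_all add: Krow_simps)

lemma good_3_27: "good 3 27" by (rule good5[of 10 12 13 22 23]) (simp_all add: Krow_simps)

lemma good_3_28: "good 3 28" by (rule good5[of 3 8 12 13 19]) (simp_all add: Krow_simps)

lemma good_4_0: "good 4 0" by (rule good4[of _ 5 15 25 27]) (simp_all add: Krow_simps Kinf_def)

lemma good_4_1: "good 4 1" by (rule good4[of _ 10 13 19 20]) (simp_all add: Krow_simps Kinf_def)

lemma good_4_2: "good 4 2" by (rule good4[of _ 6 11 22 23]) (simp_all add: Krow_simps Kinf_def)

lemma good_4_3: "good 4 3" by (rule good4[of _ 5 9 21 27]) (simp_all add: Krow_simps Kinf_def)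

lemma good_4_4: "good 4 4" by (rule good4[of _ 2 7 17 23]) (simp_all add: Krow_simps Kinf_def)

lemma good_4_5: "good 4 5" by (rule good4[of _ 0 5 6 8]) (simp_all add: Krow_simps Kinf_def)

lemma good_4_6: "good 4 6" by (rule good4[of _ 3 8 10 12]) (simp_all add: Krow_simps Kinf_def)

lemma good_4_7: "good 4 7" by (rule good4[of _ 1 7 14 23]) (simp_all add: Krow_simps Kinf_def)

lemma good_4_8: "good 4 8" by (rule good4[of _ 7 9 18 21]) (simp_all add: Krow_simps Kinf_def)

lemma good_4_9: "good 4 9" by (rule good4[of _ 2 6 19 22]) (simp_all add: Krow_simps Kinf_def)

lemma good_4_10: "good 4 10" by (rule good4[of _ 2 10 20 23]) (simp_all add: Krow_simps Kinf_def)

lemma good_4_11: "good 4 11" by (rule good4[of _ 1 5 14 15]) (simp_all add: Krow_simps Kinf_def)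

lemma good_4_12: "good 4 12" by (rule good4[of _ 5 9 11 19]) (simp_all add: Krow_simps Kinf_def)

lemma good_4_13: "good 4 13" by (rule good4[of _ 4 9 18 26]) (simp_all add: Krow_simps Kinf_def)

lemma good_4_14: "good 4 14" by (rule good4[of _ 12 13 16 18]) (simp_all add: Krow_simps Kinf_def)

lemma good_4_15: "good 4 15" by (rule good4[of _ 0 1 2 3]) (simp_all add: Krow_simps Kinf_def)

lemma good_4_16: "good 4 16" by (rule good4[of _ 12 13 16 17]) (simp_all add: Krow_simps Kinf_def)

lemma good_4_17: "good 4 17" by (rule good4[of _ 2 10 25 28]) (simp_all add: Krow_simps Kinf_def)

lemma good_4_18: "good 4 18" by (rule good4[of _ 0 8 11 14]) (simp_all add: Krow_simps Kinf_def)

lemma good_4_19: "good 4 19" by (rule good4[of _ 0 1 4 6]) (simp_all add: Krow_simps Kinf_def)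

lemma good_4_20: "good 4 20" by (rule good4[of _ 4 6 8 15]) (simp_all add: Krow_simps Kinf_def)

lemma good_4_21: "good 4 21" by (rule good4[of _ 0 1 2 12]) (simp_all add: Krow_simps Kinf_def)

lemma good_4_22: "good 4 22" by (rule good4[of _ 0 1 14 16]) (simp_all add: Krow_simps Kinf_def)

lemma good_4_23: "good 4 23" by (rule good4[of _ 2 8 13 20]) (simp_all add: Krow_simps Kinf_def)

lemma good_4_24: "good 4 24" by (rule good4[of _ 13 17 24 25]) (simp_all add: Krow_simps Kinf_def)

lemma good_4_25: "good 4 25" by (rule good4[of _ 3 8 23 27]) (simp_all add: Krow_simps Kinf_def)

lemma good_4_26: "good 4 26" by (rule good4[of _ 3 12 18 20]) (simp_all add: Krow_simps Kinf_def)

lemma good_4_27: "good 4 27" by (rule good4[of _ 3 4 7 19]) (simp_all add: Krow_simps Kinf_def)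

lemma good_4_28: "good 4 28" by (rule good4[of _ 11 15 17 19]) (simp_all add: Krow_simps Kinf_def)

lemma good_5_0: "good 5 0" by (rule good5[of 5 7 10 15 16]) (simp_all add: Krow_simps)

lemma good_5_1: "good 5 1" by (rule good5[of 7 11 13 14 26]) (simp_all add: Krow_simps)

lemma good_5_2: "good 5 2" by (rule good5[of 2 12 13 16 23]) (simp_all add: Krow_simps)

lemma good_5_3: "good 5 3" by (rule good5[of 3 6 9 12 13]) (simp_all add: Krow_simps)

lemma good_5_4: "good 5 4" by (rule good5[of 9 11 12 14 25]) (simp_all add: Krow_simps)

lemma good_5_5: "good 5 5" by (rule good5[of 0 10 15 21 27]) (simp_all add: Krow_simps)

lemma good_5_6: "good 5 6" by (rule good5[of 1 5 9 16 20]) (simp_all add: Krow_simps)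

lemma good_5_7: "good 5 7" by (rule good5[of 2 5 8 10 11]) (simp_all add: Krow_simps)

lemma good_5_8: "good 5 8" by (rule good5[of 2 7 14 18 19]) (simp_all add: Krow_simps)

lemma good_5_9: "good 5 9" by (rule good5[of 4 6 12 19 22]) (simp_all add: Krow_simps)

lemma good_5_10: "good 5 10" by (rule good5[of 1 5 8 13 20]) (simp_all add: Krow_simps)

lemma good_5_11: "good 5 11" by (rule good5[of 4 13 17 19 21]) (simp_all add: Krow_simps)

lemma good_5_12: "good 5 12" by (rule good5[of 3 8 22 24 26]) (simp_all add: Krow_simps)

lemma good_5_13: "good 5 13" by (rule good5[of 2 6 15 22 23]) (simp_all add: Krow_simps)

lemma good_5_14: "good 5 14" by (rule good5[of 1 6 12 15 24]) (simp_all add: Krow_simps)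

lemma good_5_15: "good 5 15" by (rule good5[of 0 2 4 8 24]) (simp_all add: Krow_simps)

lemma good_5_16: "good 5 16" by (rule good5[of 4 17 21 22 23]) (simp_all add: Krow_simps)

lemma good_5_17: "good 5 17" by (rule good5[of 8 11 13 26 27]) (simp_all add: Krow_simps)

lemma good_5_18: "good 5 18" by (rule good5[of 0 1 22 26 28]) (simp_all add: Krow_simps)

lemma good_5_19: "good 5 19" by (rule good5[of 0 2 18 19 20]) (simp_all add: Krow_simps)

lemma good_5_20: "good 5 20" by (rule good5[of 1 7 10 11 24]) (simp_all add: Krow_simps)

lemma good_5_21: "good 5 21" by (rule good5[of 0 1 2 20 23]) (simp_all add: Krow_simps)

lemma good_5_22: "good 5 22" by (rule good5[of 0 3 12 14 19]) (simp_all add: Krow_simps)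

lemma good_5_23: "good 5 23" by (rule good5[of 3 4 9 12 21]) (simp_all add: Krow_simps)

lemma good_5_24: "good 5 24" by (rule good5[of 3 5 18 20 21]) (simp_all add: Krow_simps)

lemma good_5_25: "good 5 25" by (rule good5[of 6 10 15 18 19]) (simp_all add: Krow_simps)

lemma good_5_26: "good 5 26" by (rule good5[of 7 8 14 18 28]) (simp_all add: Krow_simps)

lemma good_5_27: "good 5 27" by (rule good5[of 5 8 16 17 27]) (simp_all add: Krow_simps)

lemma good_5_28: "good 5 28" by (rule good5[of 6 9 16 17 19]) (simp_all add: Krow_simps)

lemma good_6_0: "good 6 0" by (rule good4[of _ 2 3 19 22]) (simp_all add: Krow_simps Kinf_def)

lemma good_6_1: "good 6 1" by (rule good4[of _ 5 7 18 20]) (simp_all add: Krow_simps Kinf_def)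

lemma good_6_2: "good 6 2" by (rule good4[of _ 5 8 12 21]) (simp_all add: Krow_simps Kinf_def)

lemma good_6_3: "good 6 3" by (rule good4[of _ 6 19 21 25]) (simp_all add: Krow_simps Kinf_def)

lemma good_6_4: "good 6 4" by (rule good4[of _ 8 13 20 26]) (simp_all add: Krow_simps Kinf_def)

lemma good_6_5: "good 6 5" by (rule good4[of _ 0 1 2 4]) (simp_all add: Krow_simps Kinf_def)

lemma good_6_6: "good 6 6" by (rule good4[of _ 2 11 18 19]) (simp_all add: Krow_simps Kinf_def)

lemma good_6_7: "good 6 7" by (rule good4[of _ 4 6 8 18]) (simp_all add: Krow_simps Kinf_def)

lemma good_6_8: "good 6 8" by (rule good4[of _ 6 14 18 23]) (simp_all add: Krow_simps Kinf_def)

lemma good_6_9: "good 6 9" by (rule good4[of _ 1 3 8 11]) (simp_all add: Krow_simps Kinf_def)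

lemma good_6_10: "good 6 10" by (rule good4[of _ 10 12 15 17]) (simp_all add: Krow_simps Kinf_def)

lemma good_6_11: "good 6 11" by (rule good4[of _ 2 4 12 16]) (simp_all add: Krow_simps Kinf_def)

lemma good_6_12: "good 6 12" by (rule good4[of _ 4 14 16 20]) (simp_all add: Krow_simps Kinf_def)

lemma good_6_13: "good 6 13" by (rule good4[of _ 1 2 7 16]) (simp_all add: Krow_simps Kinf_def)

lemma good_6_14: "good 6 14" by (rule good4[of _ 9 15 18 23]) (simp_all add: Krow_simps Kinf_def)

lemma good_6_15: "good 6 15" by (rule good4[of _ 0 10 16 20]) (simp_all add: Krow_simps Kinf_def)

lemma good_6_16: "good 6 16" by (rule good4[of _ 14 22 23 26]) (simp_all add: Krow_simps Kinf_def)

lemma good_6_17: "good 6 17" by (rule good4[of _ 1 2 13 24]) (simp_all add: Krow_simps Kinf_def)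

lemma good_6_18: "good 6 18" by (rule good4[of _ 0 8 13 19]) (simp_all add: Krow_simps Kinf_def)

lemma good_6_19: "good 6 19" by (rule good4[of _ 0 1 2 3]) (simp_all add: Krow_simps Kinf_def)

lemma good_6_20: "good 6 20" by (rule good4[of _ 1 3 12 22]) (simp_all add: Krow_simps Kinf_def)

lemma good_6_21: "good 6 21" by (rule good4[of _ 0 3 12 19]) (simp_all add: Krow_simps Kinf_def)

lemma good_6_22: "good 6 22" by (rule good4[of _ 0 5 6 7]) (simp_all add: Krow_simps Kinf_def)

lemma good_6_23: "good 6 23" by (rule good4[of _ 7 9 14 17]) (simp_all add: Krow_simps Kinf_def)

lemma good_6_24: "good 6 24" by (rule good4[of _ 5 9 10 21]) (simp_all add: Krow_simps Kinf_def)

lemma good_6_25: "good 6 25" by (rule good4[of _ 11 22 24 25]) (simp_all add: Krow_simps Kinf_def)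

lemma good_6_26: "good 6 26" by (rule good4[of _ 6 9 10 12]) (simp_all add: Krow_simps Kinf_def)

lemma good_6_27: "good 6 27" by (rule good4[of _ 13 15 23 27]) (simp_all add: Krow_simps Kinf_def)

lemma good_6_28: "good 6 28" by (rule good4[of _ 8 15 17 20]) (simp_all add: Krow_simps Kinf_def)

lemma good_7_0: "good 7 0" by (rule good5[of 5 10 19 25 27]) (simp_all add: Krow_simps)

lemma good_7_1: "good 7 1" by (rule good5[of 4 6 8 18 22]) (simp_all add: Krow_simps)

lemma good_7_2: "good 7 2" by (rule good5[of 6 14 17 19 27]) (simp_all add: Krow_simps)

lemma good_7_3: "good 7 3" by (rule good5[of 2 4 16 21 22]) (simp_all add: Krow_simps)

lemma good_7_4: "good 7 4" by (rule good5[of 1 2 13 15 23]) (simp_all add: Krow_simps)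

lemma good_7_5: "good 7 5" by (rule good5[of 0 9 10 13 14]) (simp_all add: Krow_simps)

lemma good_7_6: "good 7 6" by (rule good5[of 3 7 13 17 27]) (simp_all add: Krow_simps)

lemma good_7_7: "good 7 7" by (rule good5[of 4 12 22 25 26]) (simp_all add: Krow_simps)

lemma good_7_8: "good 7 8" by (rule good5[of 1 4 11 12 20]) (simp_all add: Krow_simps)

lemma good_7_9: "good 7 9" by (rule good5[of 2 10 12 14 21]) (simp_all add: Krow_simps)

lemma good_7_10: "good 7 10" by (rule good5[of 8 9 19 20 21]) (simp_all add: Krow_simps)

lemma good_7_11: "good 7 11" by (rule good5[of 2 8 11 17 21]) (simp_all add: Krow_simps)

lemma good_7_12: "good 7 12" by (rule good5[of 1 7 15 18 25]) (simp_all add: Krow_simps)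

lemma good_7_13: "good 7 13" by (rule good5[of 6 13 15 19 20]) (simp_all add: Krow_simps)

lemma good_7_14: "good 7 14" by (rule good5[of 5 9 10 11 12]) (simp_all add: Krow_simps)

lemma good_7_15: "good 7 15" by (rule good5[of 0 2 4 7 9]) (simp_all add: Krow_simps)

lemma good_7_16: "good 7 16" by (rule good5[of 1 3 6 7 10]) (simp_all add: Krow_simps)

lemma good_7_17: "good 7 17" by (rule good5[of 2 3 5 9 18]) (simp_all add: Krow_simps)

lemma good_7_18: "good 7 18" by (rule good5[of 0 1 3 18 26]) (simp_all add: Krow_simps)

lemma good_7_19: "good 7 19" by (rule good5[of 0 1 5 12 18]) (simp_all add: Krow_simps)

lemma good_7_20: "good 7 20" by (rule good5[of 6 8 13 23 28]) (simp_all add: Krow_simps)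

lemma good_7_21: "good 7 21" by (rule good5[of 0 20 21 26 27]) (simp_all add: Krow_simps)

lemma good_7_22: "good 7 22" by (rule good5[of 0 17 23 24 26]) (simp_all add: Krow_simps)

lemma good_7_23: "good 7 23" by (rule good5[of 7 8 14 17 22]) (simp_all add: Krow_simps)

lemma good_7_24: "good 7 24" by (rule good5[of 11 15 16 20 24]) (simp_all add: Krow_simps)

lemma good_7_25: "good 7 25" by (rule good5[of 5 8 16 18 23]) (simp_all add: Krow_simps)

lemma good_7_26: "good 7 26" by (rule good5[of 3 5 6 16 22]) (simp_all add: Krow_simps)

lemma good_7_27: "good 7 27" by (rule good5[of 2 11 12 14 21]) (simp_all add: Krow_simps)

lemma good_7_28: "good 7 28" by (rule good5[of 8 12 15 16 19]) (simp_all add: Krow_simps)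

lemma good_8_0: "good 8 0" by (rule good5[of 11 13 18 19 21]) (simp_all add: Krow_simps)

lemma good_8_1: "good 8 1" by (rule good5[of 2 9 13 18 20]) (simp_all add: Krow_simps)

lemma good_8_2: "good 8 2" by (rule good5[of 2 8 12 23 25]) (simp_all add: Krow_simps)

lemma good_8_3: "good 8 3" by (rule good5[of 1 3 4 8 11]) (simp_all add: Krow_simps)

lemma good_8_4: "good 8 4" by (rule good5[of 4 10 20 22 25]) (simp_all add: Krow_simps)

lemma good_8_5: "good 8 5" by (rule good5[of 0 7 9 17 22]) (simp_all add: Krow_simps)

lemma good_8_6: "good 8 6" by (rule good5[of 9 10 17 21 24]) (simp_all add: Krow_simps)

lemma good_8_7: "good 8 7" by (rule good5[of 1 2 6 12 13]) (simp_all add: Krow_simps)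

lemma good_8_8: "good 8 8" by (rule good5[of 7 9 16 20 22]) (simp_all add: Krow_simps)

lemma good_8_9: "good 8 9" by (rule good5[of 2 5 7 14 15]) (simp_all add: Krow_simps)

lemma good_8_10: "good 8 10" by (rule good5[of 6 16 19 22 23]) (simp_all add: Krow_simps)

lemma good_8_11: "good 8 11" by (rule good5[of 1 4 21 25 27]) (simp_all add: Krow_simps)

lemma good_8_12: "good 8 12" by (rule good5[of 5 8 16 18 19]) (simp_all add: Krow_simps)

lemma good_8_13: "good 8 13" by (rule good5[of 2 3 11 14 15]) (simp_all add: Krow_simps)

lemma good_8_14: "good 8 14" by (rule good5[of 3 5 6 17 22]) (simp_all add: Krow_simps)

lemma good_8_15: "good 8 15" by (rule good5[of 0 1 2 3 8]) (simp_all add: Krow_simps)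

lemma good_8_16: "good 8 16" by (rule good5[of 7 11 12 16 25]) (simp_all add: Krow_simps)

lemma good_8_17: "good 8 17" by (rule good5[of 1 8 14 20 21]) (simp_all add: Krow_simps)

lemma good_8_18: "good 8 18" by (rule good5[of 0 1 15 17 21]) (simp_all add: Krow_simps)

lemma good_8_19: "good 8 19" by (rule good5[of 0 10 20 21 28]) (simp_all add: Krow_simps)

lemma good_8_20: "good 8 20" by (rule good5[of 5 6 8 13 14]) (simp_all add: Krow_simps)

lemma good_8_21: "good 8 21" by (rule good5[of 0 5 13 26 28]) (simp_all add: Krow_simps)

lemma good_8_22: "good 8 22" by (rule good5[of 0 8 13 20 24]) (simp_all add: Krow_simps)

lemma good_8_23: "good 8 23" by (rule good5[of 3 17 18 19 27]) (simp_all add: Krow_simps)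

lemma good_8_24: "good 8 24" by (rule good5[of 5 6 10 12 14]) (simp_all add: Krow_simps)

lemma good_8_25: "good 8 25" by (rule good5[of 2 6 9 12 26]) (simp_all add: Krow_simps)

lemma good_8_26: "good 8 26" by (rule good5[of 4 11 12 15 19]) (simp_all add: Krow_simps)

lemma good_8_27: "good 8 27" by (rule good5[of 15 24 25 26 28]) (simp_all add: Krow_simps)

lemma good_8_28: "good 8 28" by (rule good5[of 4 7 10 18 23]) (simp_all add: Krow_simps)

lemma good_9_0: "good 9 0" by (rule good5[of 2 3 4 16 26]) (simp_all add: Krow_simps)

lemma good_9_1: "good 9 1" by (rule good5[of 6 7 17 19 26]) (simp_all add: Krow_simps)

lemma good_9_2: "good 9 2" by (rule good5[of 1 7 11 20 25]) (simp_all add: Krow_simps)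

lemma good_9_3: "good 9 3" by (rule good5[of 12 14 15 23 24]) (simp_all add: Krow_simps)

lemma good_9_4: "good 9 4" by (rule good5[of 5 6 8 12 19]) (simp_all add: Krow_simps)

lemma good_9_5: "good 9 5" by (rule good5[of 0 2 11 18 23]) (simp_all add: Krow_simps)

lemma good_9_6: "good 9 6" by (rule good5[of 1 14 17 24 25]) (simp_all add: Krow_simps)

lemma good_9_7: "good 9 7" by (rule good5[of 2 4 5 8 13]) (simp_all add: Krow_simps)

lemma good_9_8: "good 9 8" by (rule good5[of 6 13 21 22 23]) (simp_all add: Krow_simps)

lemma good_9_9: "good 9 9" by (rule good5[of 5 7 8 10 13]) (simp_all add: Krow_simps)

lemma good_9_10: "good 9 10" by (rule good5[of 1 3 14 18 19]) (simp_all add: Krow_simps)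

lemma good_9_11: "good 9 11" by (rule good5[of 2 3 15 18 22]) (simp_all add: Krow_simps)

lemma good_9_12: "good 9 12" by (rule good5[of 3 8 12 15 18]) (simp_all add: Krow_simps)

lemma good_9_13: "good 9 13" by (rule good5[of 2 12 20 26 27]) (simp_all add: Krow_simps)

lemma good_9_14: "good 9 14" by (rule good5[of 1 6 8 10 12]) (simp_all add: Krow_simps)

lemma good_9_15: "good 9 15" by (rule good5[of 0 5 11 22 25]) (simp_all add: Krow_simps)

lemma good_9_16: "good 9 16" by (rule good5[of 1 5 9 13 23]) (simp_all add: Krow_simps)

lemma good_9_17: "good 9 17" by (rule good5[of 1 13 17 20 22]) (simp_all add: Krow_simps)

lemma good_9_18: "good 9 18" by (rule good5[of 0 6 10 11 17]) (simp_all add: Krow_simps)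

lemma good_9_19: "good 9 19" by (rule good5[of 0 5 6 12 19]) (simp_all add: Krow_simps)

lemma good_9_20: "good 9 20" by (rule good5[of 3 19 23 24 25]) (simp_all add: Krow_simps)

lemma good_9_21: "good 9 21" by (rule good5[of 0 7 9 11 16]) (simp_all add: Krow_simps)

lemma good_9_22: "good 9 22" by (rule good5[of 0 4 16 19 28]) (simp_all add: Krow_simps)

lemma good_9_23: "good 9 23" by (rule good5[of 2 8 10 13 15]) (simp_all add: Krow_simps)

lemma good_9_24: "good 9 24" by (rule good5[of 4 8 12 14 26]) (simp_all add: Krow_simps)

lemma good_9_25: "good 9 25" by (rule good5[of 9 10 16 21 26]) (simp_all add: Krow_simps)

lemma good_9_26: "good 9 26" by (rule good5[of 9 17 20 21 23]) (simp_all add: Krow_simps)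

lemma good_9_27: "good 9 27" by (rule good5[of 7 15 21 24 26]) (simp_all add: Krow_simps)

lemma good_9_28: "good 9 28" by (rule good5[of 2 4 9 14 20]) (simp_all add: Krow_simps)

lemma good_10_0: "good 10 0" by (rule good5[of 12 17 18 19 28]) (simp_all add: Krow_simps)

lemma good_10_1: "good 10 1" by (rule good5[of 1 8 12 17 19]) (simp_all add: Krow_simps)

lemma good_10_2: "good 10 2" by (rule good5[of 5 6 7 12 26]) (simp_all add: Krow_simps)

lemma good_10_3: "good 10 3" by (rule good5[of 2 4 13 19 23]) (simp_all add: Krow_simps)

lemma good_10_4: "good 10 4" by (rule good5[of 5 8 10 11 13]) (simp_all add: Krow_simps)

lemma good_10_5: "good 10 5" by (rule good5[of 0 1 2 16 18]) (simp_all add: Krow_simps)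

lemma good_10_6: "good 10 6" by (rule good5[of 8 16 20 21 25]) (simp_all add: Krow_simps)

lemma good_10_7: "good 10 7" by (rule good5[of 3 9 11 12 16]) (simp_all add: Krow_simps)

lemma good_10_8: "good 10 8" by (rule good5[of 3 6 10 15 20]) (simp_all add: Krow_simps)

lemma good_10_9: "good 10 9" by (rule good5[of 1 2 3 16 17]) (simp_all add: Krow_simps)

lemma good_10_10: "good 10 10" by (rule good5[of 5 11 13 14 24]) (simp_all add: Krow_simps)

lemma good_10_11: "good 10 11" by (rule good5[of 2 5 19 20 23]) (simp_all add: Krow_simps)

lemma good_10_12: "good 10 12" by (rule good5[of 6 9 12 15 25]) (simp_all add: Krow_simps)

lemma good_10_13: "good 10 13" by (rule good5[of 1 6 10 16 17]) (simp_all add: Krow_simps)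

lemma good_10_14: "good 10 14" by (rule good5[of 5 7 14 19 23]) (simp_all add: Krow_simps)

lemma good_10_15: "good 10 15" by (rule good5[of 0 1 8 10 22]) (simp_all add: Krow_simps)

lemma good_10_16: "good 10 16" by (rule good5[of 1 8 9 18 21]) (simp_all add: Krow_simps)

lemma good_10_17: "good 10 17" by (rule good5[of 3 9 15 19 23]) (simp_all add: Krow_simps)

lemma good_10_18: "good 10 18" by (rule good5[of 0 4 14 17 22]) (simp_all add: Krow_simps)

lemma good_10_19: "good 10 19" by (rule good5[of 0 9 20 22 25]) (simp_all add: Krow_simps)

lemma good_10_20: "good 10 20" by (rule good5[of 4 7 11 12 19]) (simp_all add: Krow_simps)

lemma good_10_21: "good 10 21" by (rule good5[of 0 2 12 14 18]) (simp_all add: Krow_simps)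

lemma good_10_22: "good 10 22" by (rule good5[of 0 18 20 21 22]) (simp_all add: Krow_simps)

lemma good_10_23: "good 10 23" by (rule good5[of 7 11 13 18 28]) (simp_all add: Krow_simps)

lemma good_10_24: "good 10 24" by (rule good5[of 4 6 7 13 22]) (simp_all add: Krow_simps)

lemma good_10_25: "good 10 25" by (rule good5[of 4 8 13 14 15]) (simp_all add: Krow_simps)

lemma good_10_26: "good 10 26" by (rule good5[of 2 3 15 20 23]) (simp_all add: Krow_simps)

lemma good_10_27: "good 10 27" by (rule good5[of 2 6 21 26 27]) (simp_all add: Krow_simps)

lemma good_10_28: "good 10 28" by (rule good5[of 5 8 10 22 26]) (simp_all add: Krow_simps)

lemma good_11_0: "good 11 0" by (rule good5[of 1 12 14 22 27]) (simp_all add: Krow_simps)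

lemma good_11_1: "good 11 1" by (rule good5[of 2 17 19 21 24]) (simp_all add: Krow_simps)

lemma good_11_2: "good 11 2" by (rule good5[of 6 15 20 22 26]) (simp_all add: Krow_simps)

lemma good_11_3: "good 11 3" by (rule good5[of 2 9 10 18 23]) (simp_all add: Krow_simps)

lemma good_11_4: "good 11 4" by (rule good5[of 1 3 14 18 26]) (simp_all add: Krow_simps)

lemma good_11_5: "good 11 5" by (rule good5[of 0 3 5 10 18]) (simp_all add: Krow_simps)

lemma good_11_6: "good 11 6" by (rule good5[of 3 5 6 20 21]) (simp_all add: Krow_simps)

lemma good_11_7: "good 11 7" by (rule good5[of 2 6 7 8 9]) (simp_all add: Krow_simps)

lemma good_11_8: "good 11 8" by (rule good5[of 1 8 9 12 24]) (simp_all add: Krow_simps)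

lemma good_11_9: "good 11 9" by (rule good5[of 2 5 11 12 23]) (simp_all add: Krow_simps)

lemma good_11_10: "good 11 10" by (rule good5[of 9 13 15 19 25]) (simp_all add: Krow_simps)

lemma good_11_11: "good 11 11" by (rule good5[of 13 14 15 18 19]) (simp_all add: Krow_simps)

lemma good_11_12: "good 11 12" by (rule good5[of 1 11 13 17 21]) (simp_all add: Krow_simps)

lemma good_11_13: "good 11 13" by (rule good5[of 7 17 19 21 24]) (simp_all add: Krow_simps)

lemma good_11_14: "good 11 14" by (rule good5[of 1 3 4 21 25]) (simp_all add: Krow_simps)

lemma good_11_15: "good 11 15" by (rule good5[of 0 1 20 23 24]) (simp_all add: Krow_simps)

lemma good_11_16: "good 11 16" by (rule good5[of 4 7 18 24 25]) (simp_all add: Krow_simps)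

lemma good_11_17: "good 11 17" by (rule good5[of 7 8 12 20 23]) (simp_all add: Krow_simps)

lemma good_11_18: "good 11 18" by (rule good5[of 0 6 10 12 16]) (simp_all add: Krow_simps)

lemma good_11_19: "good 11 19" by (rule good5[of 0 2 12 13 16]) (simp_all add: Krow_simps)

lemma good_11_20: "good 11 20" by (rule good5[of 4 8 13 16 20]) (simp_all add: Krow_simps)

lemma good_11_21: "good 11 21" by (rule good5[of 0 4 6 17 19]) (simp_all add: Krow_simps)

lemma good_11_22: "good 11 22" by (rule good5[of 0 8 11 15 16]) (simp_all add: Krow_simps)

lemma good_11_23: "good 11 23" by (rule good5[of 3 5 10 23 25]) (simp_all add: Krow_simps)

lemma good_11_24: "good 11 24" by (rule good5[of 2 7 12 19 21]) (simp_all add: Krow_simps)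

lemma good_11_25: "good 11 25" by (rule good5[of 2 6 8 11 14]) (simp_all add: Krow_simps)

lemma good_11_26: "good 11 26" by (rule good5[of 5 13 15 16 22]) (simp_all add: Krow_simps)

lemma good_11_27: "good 11 27" by (rule good5[of 8 9 10 18 19]) (simp_all add: Krow_simps)

lemma good_11_28: "good 11 28" by (rule good5[of 4 5 11 20 23]) (simp_all add: Krow_simps)

lemma good_12_0: "good 12 0" by (rule good5[of 5 6 7 8 20]) (simp_all add: Krow_simps)

lemma good_12_1: "good 12 1" by (rule good5[of 2 3 5 6 9]) (simp_all add: Krow_simps)

lemma good_12_2: "good 12 2" by (rule good5[of 3 16 19 27 28]) (simp_all add: Krow_simps)

lemma good_12_3: "good 12 3" by (rule good5[of 1 3 16 21 22]) (simp_all add: Krow_simps)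

lemma good_12_4: "good 12 4" by (rule good5[of 5 16 17 22 26]) (simp_all add: Krow_simps)

lemma good_12_5: "good 12 5" by (rule good5[of 0 2 12 19 23]) (simp_all add: Krow_simps)

lemma good_12_6: "good 12 6" by (rule good5[of 7 12 13 16 24]) (simp_all add: Krow_simps)

lemma good_12_7: "good 12 7" by (rule good5[of 1 2 12 13 15]) (simp_all add: Krow_simps)

lemma good_12_8: "good 12 8" by (rule good5[of 10 17 19 20 26]) (simp_all add: Krow_simps)

lemma good_12_9: "good 12 9" by (rule good5[of 7 8 18 21 22]) (simp_all add: Krow_simps)

lemma good_12_10: "good 12 10" by (rule good5[of 4 7 16 26 27]) (simp_all add: Krow_simps)

lemma good_12_11: "good 12 11" by (rule good5[of 1 3 11 14 15]) (simp_all add: Krow_simps)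

lemma good_12_12: "good 12 12" by (rule good5[of 4 6 8 12 27]) (simp_all add: Krow_simps)

lemma good_12_13: "good 12 13" by (rule good5[of 1 10 13 17 22]) (simp_all add: Krow_simps)

lemma good_12_14: "good 12 14" by (rule good5[of 1 8 11 18 21]) (simp_all add: Krow_simps)

lemma good_12_15: "good 12 15" by (rule good5[of 0 6 14 18 20]) (simp_all add: Krow_simps)

lemma good_12_16: "good 12 16" by (rule good5[of 4 15 18 27 28]) (simp_all add: Krow_simps)

lemma good_12_17: "good 12 17" by (rule good5[of 2 4 7 8 10]) (simp_all add: Krow_simps)

lemma good_12_18: "good 12 18" by (rule good5[of 0 5 9 24 25]) (simp_all add: Krow_simps)

lemma good_12_19: "good 12 19" by (rule good5[of 0 6 8 14 27]) (simp_all add: Krow_simps)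

lemma good_12_20: "good 12 20" by (rule good5[of 3 19 21 24 25]) (simp_all add: Krow_simps)

lemma good_12_21: "good 12 21" by (rule good5[of 0 5 19 21 23]) (simp_all add: Krow_simps)

lemma good_12_22: "good 12 22" by (rule good5[of 0 2 10 14 18]) (simp_all add: Krow_simps)

lemma good_12_23: "good 12 23" by (rule good5[of 2 5 9 19 23]) (simp_all add: Krow_simps)

lemma good_12_24: "good 12 24" by (rule good5[of 4 10 15 17 20]) (simp_all add: Krow_simps)

lemma good_12_25: "good 12 25" by (rule good5[of 6 12 15 17 28]) (simp_all add: Krow_simps)

lemma good_12_26: "good 12 26" by (rule good5[of 12 13 14 20 23]) (simp_all add: Krow_simps)

lemma good_12_27: "good 12 27" by (rule good5[of 9 11 13 18 25]) (simp_all add: Krow_simps)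

lemma good_12_28: "good 12 28" by (rule good5[of 1 2 8 9 13]) (simp_all add: Krow_simps)

lemma good_13_0: "good 13 0" by (rule good5[of 3 11 12 13 21]) (simp_all add: Krow_simps)

lemma good_13_1: "good 13 1" by (rule good5[of 8 14 15 19 21]) (simp_all add: Krow_simps)

lemma good_13_2: "good 13 2" by (rule good5[of 1 7 19 24 25]) (simp_all add: Krow_simps)

lemma good_13_3: "good 13 3" by (rule good5[of 2 7 10 11 23]) (simp_all add: Krow_simps)

lemma good_13_4: "good 13 4" by (rule good5[of 8 18 19 20 27]) (simp_all add: Krow_simps)

lemma good_13_5: "good 13 5" by (rule good5[of 0 2 12 14 25]) (simp_all add: Krow_simps)

lemma good_13_6: "good 13 6" by (rule good5[of 1 4 6 8 11]) (simp_all add: Krow_simps)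

lemma good_13_7: "good 13 7" by (rule good5[of 10 17 22 25 26]) (simp_all add: Krow_simps)

lemma good_13_8: "good 13 8" by (rule good5[of 3 4 14 17 26]) (simp_all add: Krow_simps)

lemma good_13_9: "good 13 9" by (rule good5[of 6 8 9 15 18]) (simp_all add: Krow_simps)

lemma good_13_10: "good 13 10" by (rule good5[of 1 7 15 22 26]) (simp_all add: Krow_simps)

lemma good_13_11: "good 13 11" by (rule good5[of 8 21 22 23 24]) (simp_all add: Krow_simps)

lemma good_13_12: "good 13 12" by (rule good5[of 1 4 10 14 19]) (simp_all add: Krow_simps)

lemma good_13_13: "good 13 13" by (rule good5[of 1 4 5 6 12]) (simp_all add: Krow_simps)

lemma good_13_14: "good 13 14" by (rule good5[of 9 10 12 13 22]) (simp_all add: Krow_simps)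

lemma good_13_15: "good 13 15" by (rule good5[of 0 2 13 16 19]) (simp_all add: Krow_simps)

lemma good_13_16: "good 13 16" by (rule good5[of 5 11 16 17 22]) (simp_all add: Krow_simps)

lemma good_13_17: "good 13 17" by (rule good5[of 3 16 20 21 28]) (simp_all add: Krow_simps)

lemma good_13_18: "good 13 18" by (rule good5[of 0 5 9 19 24]) (simp_all add: Krow_simps)

lemma good_13_19: "good 13 19" by (rule good5[of 0 6 9 11 16]) (simp_all add: Krow_simps)

lemma good_13_20: "good 13 20" by (rule good5[of 2 4 8 17 18]) (simp_all add: Krow_simps)

lemma good_13_21: "good 13 21" by (rule good5[of 0 2 8 9 15]) (simp_all add: Krow_simps)

lemma good_13_22: "good 13 22" by (rule good5[of 0 7 12 13 21]) (simp_all add: Krow_simps)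

lemma good_13_23: "good 13 23" by (rule good5[of 6 12 13 16 24]) (simp_all add: Krow_simps)

lemma good_13_24: "good 13 24" by (rule good5[of 5 6 12 20 25]) (simp_all add: Krow_simps)

lemma good_13_25: "good 13 25" by (rule good5[of 5 15 17 18 24]) (simp_all add: Krow_simps)

lemma good_13_26: "good 13 26" by (rule good5[of 2 14 18 24 28]) (simp_all add: Krow_simps)

lemma good_13_27: "good 13 27" by (rule good5[of 1 3 10 18 23]) (simp_all add: Krow_simps)

lemma good_13_28: "good 13 28" by (rule good5[of 2 3 5 7 21]) (simp_all add: Krow_simps)

lemma good_14_0: "good 14 0" by (rule good5[of 6 9 13 16 20]) (simp_all add: Krow_simps)

lemma good_14_1: "good 14 1" by (rule good5[of 1 2 8 12 13]) (simp_all add: Krow_simps)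

lemma good_14_2: "good 14 2" by (rule good5[of 4 10 12 13 18]) (simp_all add: Krow_simps)

lemma good_14_3: "good 14 3" by (rule good5[of 2 6 7 8 16]) (simp_all add: Krow_simps)

lemma good_14_4: "good 14 4" by (rule good5[of 4 10 20 23 28]) (simp_all add: Krow_simps)

lemma good_14_5: "good 14 5" by (rule good5[of 0 1 3 9 11]) (simp_all add: Krow_simps)

lemma good_14_6: "good 14 6" by (rule good5[of 15 23 25 27 28]) (simp_all add: Krow_simps)

lemma good_14_7: "good 14 7" by (rule good5[of 6 16 18 21 24]) (simp_all add: Krow_simps)

lemma good_14_8: "good 14 8" by (rule good5[of 4 5 11 17 18]) (simp_all add: Krow_simps)

lemma good_14_9: "good 14 9" by (rule good5[of 1 4 9 13 18]) (simp_all add: Krow_simps)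

lemma good_14_10: "good 14 10" by (rule good5[of 9 12 13 15 26]) (simp_all add: Krow_simps)

lemma good_14_11: "good 14 11" by (rule good5[of 1 5 12 19 25]) (simp_all add: Krow_simps)

lemma good_14_12: "good 14 12" by (rule good5[of 1 8 9 12 14]) (simp_all add: Krow_simps)

lemma good_14_13: "good 14 13" by (rule good5[of 2 5 6 8 20]) (simp_all add: Krow_simps)

lemma good_14_14: "good 14 14" by (rule good5[of 3 19 22 26 27]) (simp_all add: Krow_simps)

lemma good_14_15: "good 14 15" by (rule good5[of 0 7 15 18 20]) (simp_all add: Krow_simps)

lemma good_14_16: "good 14 16" by (rule good5[of 4 13 14 24 26]) (simp_all add: Krow_simps)

lemma good_14_17: "good 14 17" by (rule good5[of 6 10 12 22 23]) (simp_all add: Krow_simps)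

lemma good_14_18: "good 14 18" by (rule good5[of 0 2 6 11 20]) (simp_all add: Krow_simps)

lemma good_14_19: "good 14 19" by (rule good5[of 0 2 5 17 21]) (simp_all add: Krow_simps)

lemma good_14_20: "good 14 20" by (rule good5[of 5 14 17 18 27]) (simp_all add: Krow_simps)

lemma good_14_21: "good 14 21" by (rule good5[of 0 7 11 22 23]) (simp_all add: Krow_simps)

lemma good_14_22: "good 14 22" by (rule good5[of 0 8 10 12 19]) (simp_all add: Krow_simps)

lemma good_14_23: "good 14 23" by (rule good5[of 5 14 15 22 24]) (simp_all add: Krow_simps)

lemma good_14_24: "good 14 24" by (rule good5[of 2 3 7 11 15]) (simp_all add: Krow_simps)

lemma good_14_25: "good 14 25" by (rule good5[of 3 7 8 19 21]) (simp_all add: Krow_simps)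

lemma good_14_26: "good 14 26" by (rule good5[of 1 2 3 10 20]) (simp_all add: Krow_simps)

lemma good_14_27: "good 14 27" by (rule good5[of 8 14 22 23 28]) (simp_all add: Krow_simps)

lemma good_14_28: "good 14 28" by (rule good5[of 16 17 19 24 25]) (simp_all add: Krow_simps)

lemma good_15_0: "good 15 0" by (rule good5[of 1 4 9 12 15]) (simp_all add: Krow_simps)

lemma good_15_1: "good 15 1" by (rule good5[of 2 6 9 22 25]) (simp_all add: Krow_simps)

lemma good_15_2: "good 15 2" by (rule good5[of 3 14 17 18 26]) (simp_all add: Krow_simps)

lemma good_15_3: "good 15 3" by (rule good5[of 5 9 13 17 19]) (simp_all add: Krow_simps)

lemma good_15_4: "good 15 4" by (rule good5[of 1 4 8 21 23]) (simp_all add: Krow_simps)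

lemma good_15_5: "good 15 5" by (rule good5[of 0 4 8 12 22]) (simp_all add: Krow_simps)

lemma good_15_6: "good 15 6" by (rule good5[of 5 14 19 20 24]) (simp_all add: Krow_simps)

lemma good_15_7: "good 15 7" by (rule good5[of 6 10 11 24 28]) (simp_all add: Krow_simps)

lemma good_15_8: "good 15 8" by (rule good5[of 1 5 7 15 27]) (simp_all add: Krow_simps)

lemma good_15_9: "good 15 9" by (rule good5[of 14 15 19 20 21]) (simp_all add: Krow_simps)

lemma good_15_10: "good 15 10" by (rule good5[of 1 11 12 23 25]) (simp_all add: Krow_simps)

lemma good_15_11: "good 15 11" by (rule good5[of 1 2 3 6 17]) (simp_all add: Krow_simps)

lemma good_15_12: "good 15 12" by (rule good5[of 4 6 10 16 19]) (simp_all add: Krow_simps)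

lemma good_15_13: "good 15 13" by (rule good5[of 11 14 16 18 20]) (simp_all add: Krow_simps)

lemma good_15_14: "good 15 14" by (rule good5[of 5 7 8 16 26]) (simp_all add: Krow_simps)

lemma good_15_15: "good 15 15" by (rule good5[of 0 5 17 21 23]) (simp_all add: Krow_simps)

lemma good_15_16: "good 15 16" by (rule good5[of 2 10 13 16 21]) (simp_all add: Krow_simps)

lemma good_15_17: "good 15 17" by (rule good5[of 2 7 8 13 21]) (simp_all add: Krow_simps)

lemma good_15_18: "good 15 18" by (rule good5[of 0 5 7 12 13]) (simp_all add: Krow_simps)

lemma good_15_19: "good 15 19" by (rule good5[of 0 8 12 18 26]) (simp_all add: Krow_simps)

lemma good_15_20: "good 15 20" by (rule good5[of 9 15 16 17 18]) (simp_all add: Krow_simps)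

lemma good_15_21: "good 15 21" by (rule good5[of 0 3 10 19 22]) (simp_all add: Krow_simps)

lemma good_15_22: "good 15 22" by (rule good5[of 0 2 3 8 19]) (simp_all add: Krow_simps)

lemma good_15_23: "good 15 23" by (rule good5[of 3 6 10 11 23]) (simp_all add: Krow_simps)

lemma good_15_24: "good 15 24" by (rule good5[of 2 8 15 19 20]) (simp_all add: Krow_simps)

lemma good_15_25: "good 15 25" by (rule good5[of 1 7 9 13 22]) (simp_all add: Krow_simps)

lemma good_15_26: "good 15 26" by (rule good5[of 6 11 13 18 25]) (simp_all add: Krow_simps)

lemma good_15_27: "good 15 27" by (rule good5[of 4 12 14 20 21]) (simp_all add: Krow_simps)

lemma good_15_28: "good 15 28" by (rule good5[of 2 12 22 24 28]) (simp_all add: Krow_simps)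

lemma good_16_0: "good 16 0" by (rule good5[of 4 16 18 23 28]) (simp_all add: Krow_simps)

lemma good_16_1: "good 16 1" by (rule good5[of 4 5 6 7 18]) (simp_all add: Krow_simps)

lemma good_16_2: "good 16 2" by (rule good5[of 10 11 18 19 20]) (simp_all add: Krow_simps)

lemma good_16_3: "good 16 3" by (rule good5[of 1 5 13 17 19]) (simp_all add: Krow_simps)

lemma good_16_4: "good 16 4" by (rule good5[of 13 16 20 23 24]) (simp_all add: Krow_simps)

lemma good_16_5: "good 16 5" by (rule good5[of 0 6 13 15 19]) (simp_all add: Krow_simps)

lemma good_16_6: "good 16 6" by (rule good5[of 6 8 10 12 21]) (simp_all add: Krow_simps)

lemma good_16_7: "good 16 7" by (rule good5[of 1 7 12 20 25]) (simp_all add: Krow_simps)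

lemma good_16_8: "good 16 8" by (rule good5[of 3 4 18 22 28]) (simp_all add: Krow_simps)

lemma good_16_9: "good 16 9" by (rule good5[of 1 2 5 8 15]) (simp_all add: Krow_simps)

lemma good_16_10: "good 16 10" by (rule good5[of 1 5 7 23 27]) (simp_all add: Krow_simps)

lemma good_16_11: "good 16 11" by (rule good5[of 7 8 9 10 24]) (simp_all add: Krow_simps)

lemma good_16_12: "good 16 12" by (rule good5[of 11 13 21 22 24]) (simp_all add: Krow_simps)

lemma good_16_13: "good 16 13" by (rule good5[of 5 10 13 14 18]) (simp_all add: Krow_simps)

lemma good_16_14: "good 16 14" by (rule good5[of 2 8 15 17 25]) (simp_all add: Krow_simps)

lemma good_16_15: "good 16 15" by (rule good5[of 0 2 11 12 17]) (simp_all add: Krow_simps)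

lemma good_16_16: "good 16 16" by (rule good5[of 8 9 12 19 23]) (simp_all add: Krow_simps)

lemma good_16_17: "good 16 17" by (rule good5[of 6 12 14 21 24]) (simp_all add: Krow_simps)

lemma good_16_18: "good 16 18" by (rule good5[of 0 3 7 20 23]) (simp_all add: Krow_simps)

lemma good_16_19: "good 16 19" by (rule good5[of 0 3 13 19 25]) (simp_all add: Krow_simps)

lemma good_16_20: "good 16 20" by (rule good5[of 2 3 6 9 26]) (simp_all add: Krow_simps)

lemma good_16_21: "good 16 21" by (rule good5[of 0 9 14 23 26]) (simp_all add: Krow_simps)

lemma good_16_22: "good 16 22" by (rule good5[of 0 2 12 15 19]) (simp_all add: Krow_simps)

lemma good_16_23: "good 16 23" by (rule good5[of 4 9 15 17 21]) (simp_all add: Krow_simps)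

lemma good_16_24: "good 16 24" by (rule good5[of 1 6 14 18 21]) (simp_all add: Krow_simps)

lemma good_16_25: "good 16 25" by (rule good5[of 4 8 11 16 21]) (simp_all add: Krow_simps)

lemma good_16_26: "good 16 26" by (rule good5[of 2 8 10 16 24]) (simp_all add: Krow_simps)

lemma good_16_27: "good 16 27" by (rule good5[of 5 12 16 17 27]) (simp_all add: Krow_simps)

lemma good_16_28: "good 16 28" by (rule good5[of 1 2 3 11 14]) (simp_all add: Krow_simps)

lemma good_17_0: "good 17 0" by (rule good5[of 6 7 13 19 27]) (simp_all add: Krow_simps)

lemma good_17_1: "good 17 1" by (rule good5[of 8 10 11 23 28]) (simp_all add: Krow_simps)

lemma good_17_2: "good 17 2" by (rule good5[of 1 9 20 21 24]) (simp_all add: Krow_simps)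

lemma good_17_3: "good 17 3" by (rule good5[of 7 8 10 12 14]) (simp_all add: Krow_simps)

lemma good_17_4: "good 17 4" by (rule good5[of 4 5 7 11 12]) (simp_all add: Krow_simps)

lemma good_17_5: "good 17 5" by (rule good5[of 0 3 5 12 25]) (simp_all add: Krow_simps)

lemma good_17_6: "good 17 6" by (rule good5[of 1 8 13 17 18]) (simp_all add: Krow_simps)

lemma good_17_7: "good 17 7" by (rule good5[of 2 9 14 15 28]) (simp_all add: Krow_simps)

lemma good_17_8: "good 17 8" by (rule good5[of 1 5 8 15 26]) (simp_all add: Krow_simps)

lemma good_17_9: "good 17 9" by (rule good5[of 1 16 22 24 25]) (simp_all add: Krow_simps)

lemma good_17_10: "good 17 10" by (rule good5[of 12 14 16 17 22]) (simp_all add: Krow_simps)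

lemma good_17_11: "good 17 11" by (rule good5[of 6 7 9 16 18]) (simp_all add: Krow_simps)

lemma good_17_12: "good 17 12" by (rule good5[of 2 9 18 19 27]) (simp_all add: Krow_simps)

lemma good_17_13: "good 17 13" by (rule good5[of 2 16 18 19 20]) (simp_all add: Krow_simps)

lemma good_17_14: "good 17 14" by (rule good5[of 6 9 11 14 21]) (simp_all add: Krow_simps)

lemma good_17_15: "good 17 15" by (rule good5[of 0 3 12 17 19]) (simp_all add: Krow_simps)

lemma good_17_16: "good 17 16" by (rule good5[of 3 10 20 23 24]) (simp_all add: Krow_simps)

lemma good_17_17: "good 17 17" by (rule good5[of 3 8 11 16 24]) (simp_all add: Krow_simps)

lemma good_17_18: "good 17 18" by (rule good5[of 0 2 6 8 25]) (simp_all add: Krow_simps)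

lemma good_17_19: "good 17 19" by (rule good5[of 0 4 13 15 18]) (simp_all add: Krow_simps)

lemma good_17_20: "good 17 20" by (rule good5[of 2 11 13 21 26]) (simp_all add: Krow_simps)

lemma good_17_21: "good 17 21" by (rule good5[of 0 4 10 13 25]) (simp_all add: Krow_simps)

lemma good_17_22: "good 17 22" by (rule good5[of 0 5 23 24 26]) (simp_all add: Krow_simps)

lemma good_17_23: "good 17 23" by (rule good5[of 1 7 12 15 19]) (simp_all add: Krow_simps)

lemma good_17_24: "good 17 24" by (rule good5[of 2 6 12 18 20]) (simp_all add: Krow_simps)

lemma good_17_25: "good 17 25" by (rule good5[of 3 4 5 10 21]) (simp_all add: Krow_simps)

lemma good_17_26: "good 17 26" by (rule good5[of 2 4 17 19 27]) (simp_all add: Krow_simps)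

lemma good_17_27: "good 17 27" by (rule good5[of 1 5 8 17 20]) (simp_all add: Krow_simps)

lemma good_17_28: "good 17 28" by (rule good5[of 6 13 14 15 28]) (simp_all add: Krow_simps)

lemma good_18_0: "good 18 0" by (rule good4[of _ 4 5 8 14]) (simp_all add: Krow_simps Kinf_def)

lemma good_18_1: "good 18 1" by (rule good4[of _ 1 16 18 23]) (simp_all add: Krow_simps Kinf_def)

lemma good_18_2: "good 18 2" by (rule good4[of _ 3 9 27 28]) (simp_all add: Krow_simps Kinf_def)

lemma good_18_3: "good 18 3" by (rule good4[of _ 5 9 11 12]) (simp_all add: Krow_simps Kinf_def)

lemma good_18_4: "good 18 4" by (rule good4[of _ 7 15 19 20]) (simp_all add: Krow_simps Kinf_def)

lemma good_18_5: "good 18 5" by (rule good4[of _ 0 1 2 6]) (simp_all add: Krow_simps Kinf_def)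

lemma good_18_6: "good 18 6" by (rule good4[of _ 10 11 13 18]) (simp_all add: Krow_simps Kinf_def)

lemma good_18_7: "good 18 7" by (rule good4[of _ 1 13 19 20]) (simp_all add: Krow_simps Kinf_def)

lemma good_18_8: "good 18 8" by (rule good4[of _ 1 6 13 15]) (simp_all add: Krow_simps Kinf_def)

lemma good_18_9: "good 18 9" by (rule good4[of _ 8 11 17 25]) (simp_all add: Krow_simps Kinf_def)

lemma good_18_10: "good 18 10" by (rule good4[of _ 2 8 17 19]) (simp_all add: Krow_simps Kinf_def)

lemma good_18_11: "good 18 11" by (rule good4[of _ 2 10 12 20]) (simp_all add: Krow_simps Kinf_def)

lemma good_18_12: "good 18 12" by (rule good4[of _ 3 6 12 21]) (simp_all add: Krow_simps Kinf_def)

lemma good_18_13: "good 18 13" by (rule good4[of _ 3 15 19 22]) (simp_all add: Krow_simps Kinf_def)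

lemma good_18_14: "good 18 14" by (rule good4[of _ 3 14 24 27]) (simp_all add: Krow_simps Kinf_def)

lemma good_18_15: "good 18 15" by (rule good4[of _ 0 4 10 13]) (simp_all add: Krow_simps Kinf_def)

lemma good_18_16: "good 18 16" by (rule good4[of _ 2 7 13 22]) (simp_all add: Krow_simps Kinf_def)

lemma good_18_17: "good 18 17" by (rule good4[of _ 4 5 18 22]) (simp_all add: Krow_simps Kinf_def)

lemma good_18_18: "good 18 18" by (rule good4[of _ 0 2 6 14]) (simp_all add: Krow_simps Kinf_def)

lemma good_18_19: "good 18 19" by (rule good4[of _ 0 8 11 24]) (simp_all add: Krow_simps Kinf_def)

lemma good_18_20: "good 18 20" by (rule good4[of _ 5 10 12 20]) (simp_all add: Krow_simps Kinf_def)

lemma good_18_21: "good 18 21" by (rule good4[of _ 0 4 12 15]) (simp_all add: Krow_simps Kinf_def)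

lemma good_18_22: "good 18 22" by (rule good4[of _ 0 1 2 3]) (simp_all add: Krow_simps Kinf_def)

lemma good_18_23: "good 18 23" by (rule good4[of _ 6 16 18 19]) (simp_all add: Krow_simps Kinf_def)

lemma good_18_24: "good 18 24" by (rule good4[of _ 2 8 16 18]) (simp_all add: Krow_simps Kinf_def)

lemma good_18_25: "good 18 25" by (rule good4[of _ 7 14 19 20]) (simp_all add: Krow_simps Kinf_def)

lemma good_18_26: "good 18 26" by (rule good4[of _ 1 7 16 22]) (simp_all add: Krow_simps Kinf_def)

lemma good_18_27: "good 18 27" by (rule good4[of _ 8 9 12 17]) (simp_all add: Krow_simps Kinf_def)

lemma good_18_28: "good 18 28" by (rule good4[of _ 5 21 23 26]) (simp_all add: Krow_simps Kinf_def)

lemma good_19_0: "good 19 0" by (rule good5[of 1 12 14 20 22]) (simp_all add: Krow_simps)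

lemma good_19_1: "good 19 1" by (rule good5[of 8 10 17 21 26]) (simp_all add: Krow_simps)

lemma good_19_2: "good 19 2" by (rule good5[of 6 8 13 20 25]) (simp_all add: Krow_simps)

lemma good_19_3: "good 19 3" by (rule good5[of 2 13 19 24 28]) (simp_all add: Krow_simps)

lemma good_19_4: "good 19 4" by (rule good5[of 1 14 18 19 22]) (simp_all add: Krow_simps)

lemma good_19_5: "good 19 5" by (rule good5[of 0 10 17 18 20]) (simp_all add: Krow_simps)

lemma good_19_6: "good 19 6" by (rule good5[of 1 6 15 16 18]) (simp_all add: Krow_simps)

lemma good_19_7: "good 19 7" by (rule good5[of 1 15 16 21 23]) (simp_all add: Krow_simps)

lemma good_19_8: "good 19 8" by (rule good5[of 2 11 12 14 16]) (simp_all add: Krow_simps)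

lemma good_19_9: "good 19 9" by (rule good5[of 2 3 7 12 13]) (simp_all add: Krow_simps)

lemma good_19_10: "good 19 10" by (rule good5[of 3 10 12 16 17]) (simp_all add: Krow_simps)

lemma good_19_11: "good 19 11" by (rule good5[of 3 4 8 11 14]) (simp_all add: Krow_simps)

lemma good_19_12: "good 19 12" by (rule good5[of 5 6 10 18 21]) (simp_all add: Krow_simps)

lemma good_19_13: "good 19 13" by (rule good5[of 4 9 20 23 25]) (simp_all add: Krow_simps)

lemma good_19_14: "good 19 14" by (rule good5[of 2 8 16 19 26]) (simp_all add: Krow_simps)

lemma good_19_15: "good 19 15" by (rule good5[of 0 5 7 12 14]) (simp_all add: Krow_simps)

lemma good_19_16: "good 19 16" by (rule good5[of 2 6 8 20 27]) (simp_all add: Krow_simps)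

lemma good_19_17: "good 19 17" by (rule good5[of 4 5 6 18 19]) (simp_all add: Krow_simps)

lemma good_19_18: "good 19 18" by (rule good5[of 0 4 7 9 15]) (simp_all add: Krow_simps)

lemma good_19_19: "good 19 19" by (rule good5[of 0 3 7 8 21]) (simp_all add: Krow_simps)

lemma good_19_20: "good 19 20" by (rule good5[of 2 12 19 20 21]) (simp_all add: Krow_simps)

lemma good_19_21: "good 19 21" by (rule good5[of 0 1 8 11 17]) (simp_all add: Krow_simps)

lemma good_19_22: "good 19 22" by (rule good5[of 0 2 9 13 15]) (simp_all add: Krow_simps)

lemma good_19_23: "good 19 23" by (rule good5[of 5 9 13 19 22]) (simp_all add: Krow_simps)

lemma good_19_24: "good 19 24" by (rule good5[of 5 11 13 22 24]) (simp_all add: Krow_simps)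

lemma good_19_25: "good 19 25" by (rule good5[of 1 4 9 10 26]) (simp_all add: Krow_simps)

lemma good_19_26: "good 19 26" by (rule good5[of 7 24 25 26 27]) (simp_all add: Krow_simps)

lemma good_19_27: "good 19 27" by (rule good5[of 5 11 15 22 24]) (simp_all add: Krow_simps)

lemma good_19_28: "good 19 28" by (rule good5[of 3 6 12 18 23]) (simp_all add: Krow_simps)

lemma good_20_0: "good 20 0" by (rule good5[of 6 10 11 20 24]) (simp_all add: Krow_simps)

lemma good_20_1: "good 20 1" by (rule good5[of 2 14 19 22 25]) (simp_all add: Krow_simps)

lemma good_20_2: "good 20 2" by (rule good5[of 7 10 22 24 26]) (simp_all add: Krow_simps)

lemma good_20_3: "good 20 3" by (rule good5[of 1 8 12 15 24]) (simp_all add: Krow_simps)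

lemma good_20_4: "good 20 4" by (rule good5[of 9 17 19 25 26]) (simp_all add: Krow_simps)

lemma good_20_5: "good 20 5" by (rule good5[of 0 1 17 22 23]) (simp_all add: Krow_simps)

lemma good_20_6: "good 20 6" by (rule good5[of 1 2 3 6 8]) (simp_all add: Krow_simps)

lemma good_20_7: "good 20 7" by (rule good5[of 2 3 4 5 15]) (simp_all add: Krow_simps)

lemma good_20_8: "good 20 8" by (rule good5[of 3 7 8 12 24]) (simp_all add: Krow_simps)

lemma good_20_9: "good 20 9" by (rule good5[of 4 9 13 20 21]) (simp_all add: Krow_simps)

lemma good_20_10: "good 20 10" by (rule good5[of 5 6 11 13 18]) (simp_all add: Krow_simps)

lemma good_20_11: "good 20 11" by (rule good5[of 6 7 8 13 20]) (simp_all add: Krow_simps)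

lemma good_20_12: "good 20 12" by (rule good5[of 2 5 7 15 28]) (simp_all add: Krow_simps)

lemma good_20_13: "good 20 13" by (rule good5[of 4 8 9 11 17]) (simp_all add: Krow_simps)

lemma good_20_14: "good 20 14" by (rule good5[of 2 4 9 19 20]) (simp_all add: Krow_simps)

lemma good_20_15: "good 20 15" by (rule good5[of 0 10 14 18 21]) (simp_all add: Krow_simps)

lemma good_20_16: "good 20 16" by (rule good5[of 3 9 11 12 18]) (simp_all add: Krow_simps)

lemma good_20_17: "good 20 17" by (rule good5[of 12 17 18 24 25]) (simp_all add: Krow_simps)

lemma good_20_18: "good 20 18" by (rule good5[of 0 2 5 13 27]) (simp_all add: Krow_simps)

lemma good_20_19: "good 20 19" by (rule good5[of 0 5 7 13 14]) (simp_all add: Krow_simps)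

lemma good_20_20: "good 20 20" by (rule good5[of 1 2 10 15 16]) (simp_all add: Krow_simps)

lemma good_20_21: "good 20 21" by (rule good5[of 0 4 15 16 25]) (simp_all add: Krow_simps)

lemma good_20_22: "good 20 22" by (rule good5[of 0 5 6 8 17]) (simp_all add: Krow_simps)

lemma good_20_23: "good 20 23" by (rule good5[of 8 14 16 18 25]) (simp_all add: Krow_simps)

lemma good_20_24: "good 20 24" by (rule good5[of 1 10 19 23 24]) (simp_all add: Krow_simps)

lemma good_20_25: "good 20 25" by (rule good5[of 3 6 12 13 20]) (simp_all add: Krow_simps)

lemma good_20_26: "good 20 26" by (rule good5[of 11 12 14 21 27]) (simp_all add: Krow_simps)

lemma good_20_27: "good 20 27" by (rule good5[of 12 16 19 21 22]) (simp_all add: Krow_simps)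

lemma good_20_28: "good 20 28" by (rule good5[of 1 18 21 23 26]) (simp_all add: Krow_simps)

lemma good_21_0: "good 21 0" by (rule good4[of _ 6 8 9 17]) (simp_all add: Krow_simps Kinf_def)

lemma good_21_1: "good 21 1" by (rule good4[of _ 7 14 23 27]) (simp_all add: Krow_simps Kinf_def)

lemma good_21_2: "good 21 2" by (rule good4[of _ 1 5 11 20]) (simp_all add: Krow_simps Kinf_def)

lemma good_21_3: "good 21 3" by (rule good4[of _ 3 4 8 16]) (simp_all add: Krow_simps Kinf_def)

lemma good_21_4: "good 21 4" by (rule good4[of _ 1 2 3 6]) (simp_all add: Krow_simps Kinf_def)

lemma good_21_5: "good 21 5" by (rule good4[of _ 0 1 2 3]) (simp_all add: Krow_simps Kinf_def)

lemma good_21_6: "good 21 6" by (rule good4[of _ 13 15 21 26]) (simp_all add: Krow_simps Kinf_def)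

lemma good_21_7: "good 21 7" by (rule good4[of _ 5 9 16 21]) (simp_all add: Krow_simps Kinf_def)

lemma good_21_8: "good 21 8" by (rule good4[of _ 19 22 24 25]) (simp_all add: Krow_simps Kinf_def)

lemma good_21_9: "good 21 9" by (rule good4[of _ 4 14 20 22]) (simp_all add: Krow_simps Kinf_def)

lemma good_21_10: "good 21 10" by (rule good4[of _ 2 4 10 18]) (simp_all add: Krow_simps Kinf_def)

lemma good_21_11: "good 21 11" by (rule good4[of _ 16 19 23 28]) (simp_all add: Krow_simps Kinf_def)

lemma good_21_12: "good 21 12" by (rule good4[of _ 2 7 13 14]) (simp_all add: Krow_simps Kinf_def)

lemma good_21_13: "good 21 13" by (rule good4[of _ 3 5 12 24]) (simp_all add: Krow_simps Kinf_def)

lemma good_21_14: "good 21 14" by (rule good4[of _ 5 8 10 12]) (simp_all add: Krow_simps Kinf_def)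

lemma good_21_15: "good 21 15" by (rule good4[of _ 0 8 11 12]) (simp_all add: Krow_simps Kinf_def)

lemma good_21_16: "good 21 16" by (rule good4[of _ 2 6 14 17]) (simp_all add: Krow_simps Kinf_def)

lemma good_21_17: "good 21 17" by (rule good4[of _ 4 5 15 17]) (simp_all add: Krow_simps Kinf_def)

lemma good_21_18: "good 21 18" by (rule good4[of _ 0 2 11 20]) (simp_all add: Krow_simps Kinf_def)

lemma good_21_19: "good 21 19" by (rule good4[of _ 0 1 6 10]) (simp_all add: Krow_simps Kinf_def)

lemma good_21_20: "good 21 20" by (rule good4[of _ 12 20 26 27]) (simp_all add: Krow_simps Kinf_def)

lemma good_21_21: "good 21 21" by (rule good4[of _ 0 10 15 18]) (simp_all add: Krow_simps Kinf_def)

lemma good_21_22: "good 21 22" by (rule good4[of _ 0 3 23 24]) (simp_all add: Krow_simps Kinf_def)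

lemma good_21_23: "good 21 23" by (rule good4[of _ 1 6 19 20]) (simp_all add: Krow_simps Kinf_def)

lemma good_21_24: "good 21 24" by (rule good4[of _ 7 8 9 19]) (simp_all add: Krow_simps Kinf_def)

lemma good_21_25: "good 21 25" by (rule good4[of _ 12 13 17 23]) (simp_all add: Krow_simps Kinf_def)

lemma good_21_26: "good 21 26" by (rule good4[of _ 13 15 18 19]) (simp_all add: Krow_simps Kinf_def)

lemma good_21_27: "good 21 27" by (rule good4[of _ 1 8 13 18]) (simp_all add: Krow_simps Kinf_def)

lemma good_21_28: "good 21 28" by (rule good4[of _ 2 11 18 21]) (simp_all add: Krow_simps Kinf_def)

lemma good_22_0: "good 22 0" by (rule good5[of 3 5 10 17 20]) (simp_all add: Krow_simps)

lemma good_22_1: "good 22 1" by (rule good5[of 1 3 4 12 27]) (simp_all add: Krow_simps)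

lemma good_22_2: "good 22 2" by (rule good5[of 2 3 5 12 14]) (simp_all add: Krow_simps)

lemma good_22_3: "good 22 3" by (rule good5[of 1 2 12 18 20]) (simp_all add: Krow_simps)

lemma good_22_4: "good 22 4" by (rule good5[of 1 10 11 19 28]) (simp_all add: Krow_simps)

lemma good_22_5: "good 22 5" by (rule good5[of 0 4 7 19 24]) (simp_all add: Krow_simps)

lemma good_22_6: "good 22 6" by (rule good5[of 4 8 15 26 28]) (simp_all add: Krow_simps)

lemma good_22_7: "good 22 7" by (rule good5[of 8 11 19 21 23]) (simp_all add: Krow_simps)

lemma good_22_8: "good 22 8" by (rule good5[of 2 5 12 17 18]) (simp_all add: Krow_simps)

lemma good_22_9: "good 22 9" by (rule good5[of 5 10 18 25 26]) (simp_all add: Krow_simps)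

lemma good_22_10: "good 22 10" by (rule good5[of 2 3 6 18 24]) (simp_all add: Krow_simps)

lemma good_22_11: "good 22 11" by (rule good5[of 10 15 20 23 26]) (simp_all add: Krow_simps)

lemma good_22_12: "good 22 12" by (rule good5[of 5 13 17 22 24]) (simp_all add: Krow_simps)

lemma good_22_13: "good 22 13" by (rule good5[of 4 6 12 13 21]) (simp_all add: Krow_simps)

lemma good_22_14: "good 22 14" by (rule good5[of 2 13 20 21 25]) (simp_all add: Krow_simps)

lemma good_22_15: "good 22 15" by (rule good5[of 0 9 19 21 22]) (simp_all add: Krow_simps)

lemma good_22_16: "good 22 16" by (rule good5[of 2 8 14 16 18]) (simp_all add: Krow_simps)

lemma good_22_17: "good 22 17" by (rule good5[of 6 7 11 16 17]) (simp_all add: Krow_simps)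

lemma good_22_18: "good 22 18" by (rule good5[of 0 1 16 19 20]) (simp_all add: Krow_simps)

lemma good_22_19: "good 22 19" by (rule good5[of 0 3 8 15 22]) (simp_all add: Krow_simps)

lemma good_22_20: "good 22 20" by (rule good5[of 9 11 14 15 16]) (simp_all add: Krow_simps)

lemma good_22_21: "good 22 21" by (rule good5[of 0 8 12 13 18]) (simp_all add: Krow_simps)

lemma good_22_22: "good 22 22" by (rule good5[of 0 1 12 13 27]) (simp_all add: Krow_simps)

lemma good_22_23: "good 22 23" by (rule good5[of 6 7 11 23 26]) (simp_all add: Krow_simps)

lemma good_22_24: "good 22 24" by (rule good5[of 8 9 10 14 16]) (simp_all add: Krow_simps)

lemma good_22_25: "good 22 25" by (rule good5[of 9 21 22 23 25]) (simp_all add: Krow_simps)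

lemma good_22_26: "good 22 26" by (rule good5[of 1 2 5 7 8]) (simp_all add: Krow_simps)

lemma good_22_27: "good 22 27" by (rule good5[of 6 7 9 14 20]) (simp_all add: Krow_simps)

lemma good_22_28: "good 22 28" by (rule good5[of 4 6 13 17 23]) (simp_all add: Krow_simps)

lemma good_23_0: "good 23 0" by (rule good5[of 1 2 13 16 17]) (simp_all add: Krow_simps)

lemma good_23_1: "good 23 1" by (rule good5[of 2 4 10 12 13]) (simp_all add: Krow_simps)

lemma good_23_2: "good 23 2" by (rule good5[of 1 4 14 16 19]) (simp_all add: Krow_simps)

lemma good_23_3: "good 23 3" by (rule good5[of 1 5 18 22 24]) (simp_all add: Krow_simps)

lemma good_23_4: "good 23 4" by (rule good5[of 5 6 15 16 21]) (simp_all add: Krow_simps)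

lemma good_23_5: "good 23 5" by (rule good5[of 0 15 19 23 27]) (simp_all add: Krow_simps)

lemma good_23_6: "good 23 6" by (rule good5[of 2 9 11 14 25]) (simp_all add: Krow_simps)

lemma good_23_7: "good 23 7" by (rule good5[of 3 5 6 20 28]) (simp_all add: Krow_simps)

lemma good_23_8: "good 23 8" by (rule good5[of 2 8 13 16 23]) (simp_all add: Krow_simps)

lemma good_23_9: "good 23 9" by (rule good5[of 4 11 12 13 20]) (simp_all add: Krow_simps)

lemma good_23_10: "good 23 10" by (rule good5[of 7 12 14 21 24]) (simp_all add: Krow_simps)

lemma good_23_11: "good 23 11" by (rule good5[of 6 8 9 17 26]) (simp_all add: Krow_simps)

lemma good_23_12: "good 23 12" by (rule good5[of 2 11 17 20 26]) (simp_all add: Krow_simps)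

lemma good_23_13: "good 23 13" by (rule good5[of 8 14 23 25 26]) (simp_all add: Krow_simps)

lemma good_23_14: "good 23 14" by (rule good5[of 2 10 18 19 26]) (simp_all add: Krow_simps)

lemma good_23_15: "good 23 15" by (rule good5[of 0 9 13 19 21]) (simp_all add: Krow_simps)

lemma good_23_16: "good 23 16" by (rule good5[of 3 7 8 9 15]) (simp_all add: Krow_simps)

lemma good_23_17: "good 23 17" by (rule good5[of 1 6 14 19 23]) (simp_all add: Krow_simps)

lemma good_23_18: "good 23 18" by (rule good5[of 0 8 9 12 24]) (simp_all add: Krow_simps)

lemma good_23_19: "good 23 19" by (rule good5[of 0 7 10 12 18]) (simp_all add: Krow_simps)

lemma good_23_20: "good 23 20" by (rule good5[of 7 12 15 17 18]) (simp_all add: Krow_simps)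

lemma good_23_21: "good 23 21" by (rule good5[of 0 1 5 6 18]) (simp_all add: Krow_simps)

lemma good_23_22: "good 23 22" by (rule good5[of 0 6 11 21 22]) (simp_all add: Krow_simps)

lemma good_23_23: "good 23 23" by (rule good5[of 10 20 21 22 23]) (simp_all add: Krow_simps)

lemma good_23_24: "good 23 24" by (rule good5[of 2 4 5 17 27]) (simp_all add: Krow_simps)

lemma good_23_25: "good 23 25" by (rule good5[of 1 11 12 15 19]) (simp_all add: Krow_simps)

lemma good_23_26: "good 23 26" by (rule good5[of 3 4 5 22 26]) (simp_all add: Krow_simps)

lemma good_23_27: "good 23 27" by (rule good5[of 3 7 8 18 20]) (simp_all add: Krow_simps)

lemma good_23_28: "good 23 28" by (rule good5[of 3 8 10 13 19]) (simp_all add: Krow_simps)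

lemma good_24_0: "good 24 0" by (rule good5[of 8 20 21 22 23]) (simp_all add: Krow_simps)

lemma good_24_1: "good 24 1" by (rule good5[of 1 6 11 15 18]) (simp_all add: Krow_simps)

lemma good_24_2: "good 24 2" by (rule good5[of 1 5 9 13 18]) (simp_all add: Krow_simps)

lemma good_24_3: "good 24 3" by (rule good5[of 7 8 14 17 18]) (simp_all add: Krow_simps)

lemma good_24_4: "good 24 4" by (rule good5[of 2 3 10 22 25]) (simp_all add: Krow_simps)

lemma good_24_5: "good 24 5" by (rule good5[of 0 4 6 8 15]) (simp_all add: Krow_simps)

lemma good_24_6: "good 24 6" by (rule good5[of 2 9 12 19 22]) (simp_all add: Krow_simps)

lemma good_24_7: "good 24 7" by (rule good5[of 9 12 17 20 27]) (simp_all add: Krow_simps)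

lemma good_24_8: "good 24 8" by (rule good5[of 8 12 23 24 25]) (simp_all add: Krow_simps)

lemma good_24_9: "good 24 9" by (rule good5[of 7 9 10 18 19]) (simp_all add: Krow_simps)

lemma good_24_10: "good 24 10" by (rule good5[of 2 8 15 22 25]) (simp_all add: Krow_simps)

lemma good_24_11: "good 24 11" by (rule good5[of 6 11 23 26 27]) (simp_all add: Krow_simps)

lemma good_24_12: "good 24 12" by (rule good5[of 2 7 17 19 21]) (simp_all add: Krow_simps)

lemma good_24_13: "good 24 13" by (rule good5[of 3 7 10 12 16]) (simp_all add: Krow_simps)

lemma good_24_14: "good 24 14" by (rule good5[of 11 16 18 23 26]) (simp_all add: Krow_simps)

lemma good_24_15: "good 24 15" by (rule good5[of 0 6 13 16 19]) (simp_all add: Krow_simps)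

lemma good_24_16: "good 24 16" by (rule good5[of 1 5 6 13 20]) (simp_all add: Krow_simps)

lemma good_24_17: "good 24 17" by (rule good5[of 13 14 16 25 26]) (simp_all add: Krow_simps)

lemma good_24_18: "good 24 18" by (rule good5[of 0 10 12 15 20]) (simp_all add: Krow_simps)

lemma good_24_19: "good 24 19" by (rule good5[of 0 5 8 15 23]) (simp_all add: Krow_simps)

lemma good_24_20: "good 24 20" by (rule good5[of 1 4 7 8 10]) (simp_all add: Krow_simps)

lemma good_24_21: "good 24 21" by (rule good5[of 0 5 14 16 20]) (simp_all add: Krow_simps)

lemma good_24_22: "good 24 22" by (rule good5[of 0 2 4 24 25]) (simp_all add: Krow_simps)

lemma good_24_23: "good 24 23" by (rule good5[of 3 17 21 23 24]) (simp_all add: Krow_simps)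

lemma good_24_24: "good 24 24" by (rule good5[of 1 3 11 13 17]) (simp_all add: Krow_simps)

lemma good_24_25: "good 24 25" by (rule good5[of 3 13 14 18 19]) (simp_all add: Krow_simps)

lemma good_24_26: "good 24 26" by (rule good5[of 4 9 12 22 27]) (simp_all add: Krow_simps)

lemma good_24_27: "good 24 27" by (rule good5[of 2 4 5 6 11]) (simp_all add: Krow_simps)

lemma good_24_28: "good 24 28" by (rule good5[of 1 2 5 14 24]) (simp_all add: Krow_simps)

lemma good_25_0: "good 25 0" by (rule good5[of 1 8 9 11 23]) (simp_all add: Krow_simps)

lemma good_25_1: "good 25 1" by (rule good5[of 1 3 4 12 16]) (simp_all add: Krow_simps)

lemma good_25_2: "good 25 2" by (rule good5[of 2 7 8 13 21]) (simp_all add: Krow_simps)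

lemma good_25_3: "good 25 3" by (rule good5[of 10 11 13 14 15]) (simp_all add: Krow_simps)

lemma good_25_4: "good 25 4" by (rule good5[of 2 13 15 22 24]) (simp_all add: Krow_simps)

lemma good_25_5: "good 25 5" by (rule good5[of 0 6 7 16 19]) (simp_all add: Krow_simps)

lemma good_25_6: "good 25 6" by (rule good5[of 7 12 17 19 23]) (simp_all add: Krow_simps)

lemma good_25_7: "good 25 7" by (rule good5[of 14 17 18 22 27]) (simp_all add: Krow_simps)

lemma good_25_8: "good 25 8" by (rule good5[of 2 10 19 21 22]) (simp_all add: Krow_simps)

lemma good_25_9: "good 25 9" by (rule good5[of 6 20 21 27 28]) (simp_all add: Krow_simps)

lemma good_25_10: "good 25 10" by (rule good5[of 2 3 6 10 21]) (simp_all add: Krow_simps)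

lemma good_25_11: "good 25 11" by (rule good5[of 5 8 13 14 22]) (simp_all add: Krow_simps)

lemma good_25_12: "good 25 12" by (rule good5[of 8 13 18 20 23]) (simp_all add: Krow_simps)

lemma good_25_13: "good 25 13" by (rule good5[of 7 11 18 22 24]) (simp_all add: Krow_simps)

lemma good_25_14: "good 25 14" by (rule good5[of 5 12 14 18 23]) (simp_all add: Krow_simps)

lemma good_25_15: "good 25 15" by (rule good5[of 0 1 12 15 17]) (simp_all add: Krow_simps)

lemma good_25_16: "good 25 16" by (rule good5[of 4 5 11 19 20]) (simp_all add: Krow_simps)

lemma good_25_17: "good 25 17" by (rule good5[of 9 22 23 26 28]) (simp_all add: Krow_simps)

lemma good_25_18: "good 25 18" by (rule good5[of 0 4 13 14 26]) (simp_all add: Krow_simps)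

lemma good_25_19: "good 25 19" by (rule good5[of 0 1 11 15 17]) (simp_all add: Krow_simps)

lemma good_25_20: "good 25 20" by (rule good5[of 2 3 18 21 23]) (simp_all add: Krow_simps)

lemma good_25_21: "good 25 21" by (rule good5[of 0 3 6 8 25]) (simp_all add: Krow_simps)

lemma good_25_22: "good 25 22" by (rule good5[of 0 3 4 5 9]) (simp_all add: Krow_simps)

lemma good_25_23: "good 25 23" by (rule good5[of 1 4 5 10 12]) (simp_all add: Krow_simps)

lemma good_25_24: "good 25 24" by (rule good5[of 6 8 12 15 17]) (simp_all add: Krow_simps)

lemma good_25_25: "good 25 25" by (rule good5[of 2 7 12 18 19]) (simp_all add: Krow_simps)

lemma good_25_26: "good 25 26" by (rule good5[of 2 5 8 9 16]) (simp_all add: Krow_simps)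

lemma good_25_27: "good 25 27" by (rule good5[of 1 9 16 20 24]) (simp_all add: Krow_simps)

lemma good_25_28: "good 25 28" by (rule good5[of 6 10 16 24 27]) (simp_all add: Krow_simps)

lemma good_26_0: "good 26 0" by (rule good4[of _ 1 2 10 14]) (simp_all add: Krow_simps Kinf_def)

lemma good_26_1: "good 26 1" by (rule good4[of _ 24 25 27 28]) (simp_all add: Krow_simps Kinf_def)

lemma good_26_2: "good 26 2" by (rule good4[of _ 2 11 12 17]) (simp_all add: Krow_simps Kinf_def)

lemma good_26_3: "good 26 3" by (rule good4[of _ 6 8 12 19]) (simp_all add: Krow_simps Kinf_def)

lemma good_26_4: "good 26 4" by (rule good4[of _ 6 8 14 15]) (simp_all add: Krow_simps Kinf_def)

lemma good_26_5: "good 26 5" by (rule good4[of _ 0 11 13 20]) (simp_all add: Krow_simps Kinf_def)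

lemma good_26_6: "good 26 6" by (rule good4[of _ 2 5 7 19]) (simp_all add: Krow_simps Kinf_def)

lemma good_26_7: "good 26 7" by (rule good4[of _ 3 17 18 20]) (simp_all add: Krow_simps Kinf_def)

lemma good_26_8: "good 26 8" by (rule good4[of _ 2 9 11 28]) (simp_all add: Krow_simps Kinf_def)

lemma good_26_9: "good 26 9" by (rule good4[of _ 5 15 24 27]) (simp_all add: Krow_simps Kinf_def)

lemma good_26_10: "good 26 10" by (rule good4[of _ 16 20 21 28]) (simp_all add: Krow_simps Kinf_def)

lemma good_26_11: "good 26 11" by (rule good4[of _ 5 12 16 22]) (simp_all add: Krow_simps Kinf_def)

lemma good_26_12: "good 26 12" by (rule good4[of _ 4 12 16 23]) (simp_all add: Krow_simps Kinf_def)

lemma good_26_13: "good 26 13" by (rule good4[of _ 8 9 10 12]) (simp_all add: Krow_simps Kinf_def)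

lemma good_26_14: "good 26 14" by (rule good4[of _ 1 4 16 22]) (simp_all add: Krow_simps Kinf_def)

lemma good_26_15: "good 26 15" by (rule good4[of _ 0 6 19 22]) (simp_all add: Krow_simps Kinf_def)

lemma good_26_16: "good 26 16" by (rule good4[of _ 8 19 21 25]) (simp_all add: Krow_simps Kinf_def)

lemma good_26_17: "good 26 17" by (rule good4[of _ 3 5 9 15]) (simp_all add: Krow_simps Kinf_def)

lemma good_26_18: "good 26 18" by (rule good4[of _ 0 1 2 3]) (simp_all add: Krow_simps Kinf_def)

lemma good_26_19: "good 26 19" by (rule good4[of _ 0 3 4 13]) (simp_all add: Krow_simps Kinf_def)

lemma good_26_20: "good 26 20" by (rule good4[of _ 9 13 22 23]) (simp_all add: Krow_simps Kinf_def)

lemma good_26_21: "good 26 21" by (rule good4[of _ 0 5 8 11]) (simp_all add: Krow_simps Kinf_def)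

lemma good_26_22: "good 26 22" by (rule good4[of _ 0 1 6 10]) (simp_all add: Krow_simps Kinf_def)

lemma good_26_23: "good 26 23" by (rule good4[of _ 2 8 12 18]) (simp_all add: Krow_simps Kinf_def)

lemma good_26_24: "good 26 24" by (rule good4[of _ 2 7 18 22]) (simp_all add: Krow_simps Kinf_def)

lemma good_26_25: "good 26 25" by (rule good4[of _ 18 20 24 25]) (simp_all add: Krow_simps Kinf_def)

lemma good_26_26: "good 26 26" by (rule good4[of _ 1 4 14 19]) (simp_all add: Krow_simps Kinf_def)

lemma good_26_27: "good 26 27" by (rule good4[of _ 3 7 10 13]) (simp_all add: Krow_simps Kinf_def)

lemma good_26_28: "good 26 28" by (rule good4[of _ 1 6 7 13]) (simp_all add: Krow_simps Kinf_def)

lemma good_27_0: "good 27 0" by (rule good5[of 2 12 18 23 25]) (simp_all add: Krow_simps)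

lemma good_27_1: "good 27 1" by (rule good5[of 5 12 17 20 24]) (simp_all add: Krow_simps)

lemma good_27_2: "good 27 2" by (rule good5[of 15 16 17 22 28]) (simp_all add: Krow_simps)

lemma good_27_3: "good 27 3" by (rule good5[of 10 15 23 25 27]) (simp_all add: Krow_simps)

lemma good_27_4: "good 27 4" by (rule good5[of 2 3 5 9 14]) (simp_all add: Krow_simps)

lemma good_27_5: "good 27 5" by (rule good5[of 0 8 13 18 20]) (simp_all add: Krow_simps)

lemma good_27_6: "good 27 6" by (rule good5[of 2 5 12 13 18]) (simp_all add: Krow_simps)

lemma good_27_7: "good 27 7" by (rule good5[of 11 13 18 19 21]) (simp_all add: Krow_simps)

lemma good_27_8: "good 27 8" by (rule good5[of 4 8 9 10 14]) (simp_all add: Krow_simps)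

lemma good_27_9: "good 27 9" by (rule good5[of 6 9 24 26 28]) (simp_all add: Krow_simps)

lemma good_27_10: "good 27 10" by (rule good5[of 4 8 11 17 19]) (simp_all add: Krow_simps)

lemma good_27_11: "good 27 11" by (rule good5[of 7 9 12 27 28]) (simp_all add: Krow_simps)

lemma good_27_12: "good 27 12" by (rule good5[of 5 6 10 14 23]) (simp_all add: Krow_simps)

lemma good_27_13: "good 27 13" by (rule good5[of 1 5 8 18 19]) (simp_all add: Krow_simps)

lemma good_27_14: "good 27 14" by (rule good5[of 3 4 13 15 17]) (simp_all add: Krow_simps)

lemma good_27_15: "good 27 15" by (rule good5[of 0 3 4 8 13]) (simp_all add: Krow_simps)

lemma good_27_16: "good 27 16" by (rule good5[of 2 3 5 6 19]) (simp_all add: Krow_simps)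

lemma good_27_17: "good 27 17" by (rule good5[of 1 7 10 27 28]) (simp_all add: Krow_simps)

lemma good_27_18: "good 27 18" by (rule good5[of 0 15 18 21 22]) (simp_all add: Krow_simps)

lemma good_27_19: "good 27 19" by (rule good5[of 0 10 12 14 17]) (simp_all add: Krow_simps)

lemma good_27_20: "good 27 20" by (rule good5[of 7 11 12 25 26]) (simp_all add: Krow_simps)

lemma good_27_21: "good 27 21" by (rule good5[of 0 1 2 7 13]) (simp_all add: Krow_simps)

lemma good_27_22: "good 27 22" by (rule good5[of 0 2 4 6 22]) (simp_all add: Krow_simps)

lemma good_27_23: "good 27 23" by (rule good5[of 11 15 16 24 26]) (simp_all add: Krow_simps)

lemma good_27_24: "good 27 24" by (rule good5[of 3 8 16 21 23]) (simp_all add: Krow_simps)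

lemma good_27_25: "good 27 25" by (rule good5[of 1 8 16 19 21]) (simp_all add: Krow_simps)

lemma good_27_26: "good 27 26" by (rule good5[of 6 11 19 21 23]) (simp_all add: Krow_simps)

lemma good_27_27: "good 27 27" by (rule good5[of 1 2 6 16 20]) (simp_all add: Krow_simps)

lemma good_27_28: "good 27 28" by (rule good5[of 1 7 9 12 19]) (simp_all add: Krow_simps)

lemma good_28_0: "good 28 0" by (rule good5[of 8 9 18 22 26]) (simp_all add: Krow_simps)

lemma good_28_1: "good 28 1" by (rule good5[of 3 5 13 14 23]) (simp_all add: Krow_simps)

lemma good_28_2: "good 28 2" by (rule good5[of 2 8 9 10 13]) (simp_all add: Krow_simps)

lemma good_28_3: "good 28 3" by (rule good5[of 6 15 21 22 23]) (simp_all add: Krow_simps)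

lemma good_28_4: "good 28 4" by (rule good5[of 2 4 7 21 25]) (simp_all add: Krow_simps)

lemma good_28_5: "good 28 5" by (rule good5[of 0 8 14 21 22]) (simp_all add: Krow_simps)

lemma good_28_6: "good 28 6" by (rule good5[of 4 6 19 23 24]) (simp_all add: Krow_simps)

lemma good_28_7: "good 28 7" by (rule good5[of 5 8 10 12 16]) (simp_all add: Krow_simps)

lemma good_28_8: "good 28 8" by (rule good5[of 5 12 13 15 16]) (simp_all add: Krow_simps)

lemma good_28_9: "good 28 9" by (rule good5[of 10 11 16 19 22]) (simp_all add: Krow_simps)

lemma good_28_10: "good 28 10" by (rule good5[of 4 6 7 20 28]) (simp_all add: Krow_simps)

lemma good_28_11: "good 28 11" by (rule good5[of 3 4 5 16 18]) (simp_all add: Krow_simps)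

lemma good_28_12: "good 28 12" by (rule good5[of 1 3 11 26 28]) (simp_all add: Krow_simps)

lemma good_28_13: "good 28 13" by (rule good5[of 3 7 17 24 27]) (simp_all add: Krow_simps)

lemma good_28_14: "good 28 14" by (rule good5[of 2 7 17 20 23]) (simp_all add: Krow_simps)

lemma good_28_15: "good 28 15" by (rule good5[of 0 11 16 21 27]) (simp_all add: Krow_simps)

lemma good_28_16: "good 28 16" by (rule good5[of 1 6 8 12 15]) (simp_all add: Krow_simps)

lemma good_28_17: "good 28 17" by (rule good5[of 8 12 15 18 19]) (simp_all add: Krow_simps)

lemma good_28_18: "good 28 18" by (rule good5[of 0 4 12 18 23]) (simp_all add: Krow_simps)

lemma good_28_19: "good 28 19" by (rule good5[of 0 2 9 14 24]) (simp_all add: Krow_simps)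

lemma good_28_20: "good 28 20" by (rule good5[of 1 2 6 19 25]) (simp_all add: Krow_simps)

lemma good_28_21: "good 28 21" by (rule good5[of 0 3 6 7 13]) (simp_all add: Krow_simps)

lemma good_28_22: "good 28 22" by (rule good5[of 0 10 13 17 27]) (simp_all add: Krow_simps)

lemma good_28_23: "good 28 23" by (rule good5[of 12 13 14 19 20]) (simp_all add: Krow_simps)

lemma good_28_24: "good 28 24" by (rule good5[of 1 9 18 23 25]) (simp_all add: Krow_simps)

lemma good_28_25: "good 28 25" by (rule good5[of 2 5 11 20 22]) (simp_all add: Krow_simps)

lemma good_28_26: "good 28 26" by (rule good5[of 1 8 17 19 21]) (simp_all add: Krow_simps)

lemma good_28_27: "good 28 27" by (rule good5[of 1 2 10 14 26]) (simp_all add: Krow_simps)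

lemma good_28_28: "good 28 28" by (rule good5[of 5 9 11 12 15]) (simp_all add: Krow_simps)

lemmas goods = good_0_0 good_0_1 good_0_2 good_0_3 good_0_4 good_0_5 good_0_6 good_0_7 good_0_8 good_0_9 good_0_10 good_0_11 good_0_12 good_0_13 good_0_14 good_0_15 good_0_16 good_0_17 good_0_18 good_0_19 good_0_20 good_0_21 good_0_22 good_0_23 good_0_24 good_0_25 good_0_26 good_0_27 good_0_28 good_1_0 good_1_1 good_1_2 good_1_3 good_1_4 good_1_5 good_1_6 good_1_7 good_1_8 good_1_9 good_1_10 good_1_11 good_1_12 good_1_13 good_1_14 good_1_15 good_1_16 good_1_17 good_1_18 good_1_19 good_1_20 good_1_21 good_1_22 good_1_23 good_1_24 good_1_25 good_1_26 good_1_27 good_1_28 good_2_0 good_2_1 good_2_2 good_2_3 good_2_4 good_2_5 good_2_6 good_2_7 good_2_8 good_2_9 good_2_10 good_2_11 good_2_12 good_2_13 good_2_14 good_2_15 good_2_16 good_2_17 good_2_18 good_2_19 good_2_20 good_2_21 good_2_22 good_2_23 good_2_24 good_2_25 good_2_26 good_2_27 good_2_28 good_3_0 good_3_1 good_3_2 good_3_3 good_3_4 good_3_5 good_3_6 good_3_7 good_3_8 good_3_9 good_3_10 good_3_11 good_3_12 good_3_13 good_3_14 good_3_15 good_3_16 good_3_17 good_3_18 good_3_19 good_3_20 good_3_21 good_3_22 good_3_23 good_3_24 good_3_25 good_3_26 good_3_27 good_3_28 good_4_0 good_4_1 good_4_2 good_4_3 good_4_4 good_4_5 good_4_6 good_4_7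 good_4_8 good_4_9 good_4_10 good_4_11 good_4_12 good_4_13 good_4_14 good_4_15 good_4_16 good_4_17 good_4_18 good_4_19 good_4_20 good_4_21 good_4_22 good_4_23 good_4_24 good_4_25 good_4_26 good_4_27 good_4_28 good_5_0 good_5_1 good_5_2 good_5_3 good_5_4 good_5_5 good_5_6 good_5_7 good_5_8 good_5_9 good_5_10 good_5_11 good_5_12 good_5_13 good_5_14 good_5_15 good_5_16 good_5_17 good_5_18 good_5_19 good_5_20 good_5_21 good_5_22 good_5_23 good_5_24 good_5_25 good_5_26 good_5_27 good_5_28 good_6_0 good_6_1 good_6_2 good_6_3 good_6_4 good_6_5 good_6_6 good_6_7 good_6_8 good_6_9 good_6_10 good_6_11 good_6_12 good_6_13 good_6_14 good_6_15 good_6_16 good_6_17 good_6_18 good_6_19 good_6_20 good_6_21 good_6_22 good_6_23 good_6_24 good_6_25 good_6_26 good_6_27 good_6_28 good_7_0 good_7_1 good_7_2 good_7_3 good_7_4 good_7_5 good_7_6 good_7_7 good_7_8 good_7_9 good_7_10 good_7_11 good_7_12 good_7_13 good_7_14 good_7_15 good_7_16 good_7_17 good_7_18 good_7_19 good_7_20 good_7_21 good_7_22 good_7_23 good_7_24 good_7_25 good_7_26 good_7_27 good_7_28 good_8_0 good_8_1 good_8_2 good_8_3 good_8_4 good_8_5 good_8_6 good_8_7 good_8_8 good_8_9 good_8_10 good_8_11 good_8_12 good_8_13 good_8_14 good_8_15 good_8_16 good_8_17 good_8_18 good_8_19 good_8_20 good_8_21 good_8_22 good_8_23 good_8_24 good_8_25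 good_8_26 good_8_27 good_8_28 good_9_0 good_9_1 good_9_2 good_9_3 good_9_4 good_9_5 good_9_6 good_9_7 good_9_8 good_9_9 good_9_10 good_9_11 good_9_12 good_9_13 good_9_14 good_9_15 good_9_16 good_9_17 good_9_18 good_9_19 good_9_20 good_9_21 good_9_22 good_9_23 good_9_24 good_9_25 good_9_26 good_9_27 good_9_28 good_10_0 good_10_1 good_10_2 good_10_3 good_10_4 good_10_5 good_10_6 good_10_7 good_10_8 good_10_9 good_10_10 good_10_11 good_10_12 good_10_13 good_10_14 good_10_15 good_10_16 good_10_17 good_10_18 good_10_19 good_10_20 good_10_21 good_10_22 good_10_23 good_10_24 good_10_25 good_10_26 good_10_27 good_10_28 good_11_0 good_11_1 good_11_2 good_11_3 good_11_4 good_11_5 good_11_6 good_11_7 good_11_8 good_11_9 good_11_10 good_11_11 good_11_12 good_11_13 good_11_14 good_11_15 good_11_16 good_11_17 good_11_18 good_11_19 good_11_20 good_11_21 good_11_22 good_11_23 good_11_24 good_11_25 good_11_26 good_11_27 good_11_28 good_12_0 good_12_1 good_12_2 good_12_3 good_12_4 good_12_5 good_12_6 good_12_7 good_12_8 good_12_9 good_12_10 good_12_11 good_12_12 good_12_13 good_12_14 good_12_15 good_12_16 good_12_17 good_12_18 good_12_19 good_12_20 good_12_21 good_12_22 good_12_23 good_12_24 good_12_25 good_12_26 good_12_27 good_12_28 good_13_0 good_13_1 good_13_2 good_13_3 good_13_4 good_13_5 good_13_6 good_13_7 good_13_8 good_13_9 good_13_10 good_13_11 good_13_12 good_13_13 good_13_14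 good_13_15 good_13_16 good_13_17 good_13_18 good_13_19 good_13_20 good_13_21 good_13_22 good_13_23 good_13_24 good_13_25 good_13_26 good_13_27 good_13_28 good_14_0 good_14_1 good_14_2 good_14_3 good_14_4 good_14_5 good_14_6 good_14_7 good_14_8 good_14_9 good_14_10 good_14_11 good_14_12 good_14_13 good_14_14 good_14_15 good_14_16 good_14_17 good_14_18 good_14_19 good_14_20 good_14_21 good_14_22 good_14_23 good_14_24 good_14_25 good_14_26 good_14_27 good_14_28 good_15_0 good_15_1 good_15_2 good_15_3 good_15_4 good_15_5 good_15_6 good_15_7 good_15_8 good_15_9 good_15_10 good_15_11 good_15_12 good_15_13 good_15_14 good_15_15 good_15_16 good_15_17 good_15_18 good_15_19 good_15_20 good_15_21 good_15_22 good_15_23 good_15_24 good_15_25 good_15_26 good_15_27 good_15_28 good_16_0 good_16_1 good_16_2 good_16_3 good_16_4 good_16_5 good_16_6 good_16_7 good_16_8 good_16_9 good_16_10 good_16_11 good_16_12 good_16_13 good_16_14 good_16_15 good_16_16 good_16_17 good_16_18 good_16_19 good_16_20 good_16_21 good_16_22 good_16_23 good_16_24 good_16_25 good_16_26 good_16_27 good_16_28 good_17_0 good_17_1 good_17_2 good_17_3 good_17_4 good_17_5 good_17_6 good_17_7 good_17_8 good_17_9 good_17_10 good_17_11 good_17_12 good_17_13 good_17_14 good_17_15 good_17_16 good_17_17 good_17_18 good_17_19 good_17_20 good_17_21 good_17_22 good_17_23 good_17_24 good_17_25 good_17_26 good_17_27 good_17_28 good_18_0 good_18_1 good_18_2 good_18_3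 good_18_4 good_18_5 good_18_6 good_18_7 good_18_8 good_18_9 good_18_10 good_18_11 good_18_12 good_18_13 good_18_14 good_18_15 good_18_16 good_18_17 good_18_18 good_18_19 good_18_20 good_18_21 good_18_22 good_18_23 good_18_24 good_18_25 good_18_26 good_18_27 good_18_28 good_19_0 good_19_1 good_19_2 good_19_3 good_19_4 good_19_5 good_19_6 good_19_7 good_19_8 good_19_9 good_19_10 good_19_11 good_19_12 good_19_13 good_19_14 good_19_15 good_19_16 good_19_17 good_19_18 good_19_19 good_19_20 good_19_21 good_19_22 good_19_23 good_19_24 good_19_25 good_19_26 good_19_27 good_19_28 good_20_0 good_20_1 good_20_2 good_20_3 good_20_4 good_20_5 good_20_6 good_20_7 good_20_8 good_20_9 good_20_10 good_20_11 good_20_12 good_20_13 good_20_14 good_20_15 good_20_16 good_20_17 good_20_18 good_20_19 good_20_20 good_20_21 good_20_22 good_20_23 good_20_24 good_20_25 good_20_26 good_20_27 good_20_28 good_21_0 good_21_1 good_21_2 good_21_3 good_21_4 good_21_5 good_21_6 good_21_7 good_21_8 good_21_9 good_21_10 good_21_11 good_21_12 good_21_13 good_21_14 good_21_15 good_21_16 good_21_17 good_21_18 good_21_19 good_21_20 good_21_21 good_21_22 good_21_23 good_21_24 good_21_25 good_21_26 good_21_27 good_21_28 good_22_0 good_22_1 good_22_2 good_22_3 good_22_4 good_22_5 good_22_6 good_22_7 good_22_8 good_22_9 good_22_10 good_22_11 good_22_12 good_22_13 good_22_14 good_22_15 good_22_16 good_22_17 good_22_18 good_22_19 good_22_20 good_22_21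 good_22_22 good_22_23 good_22_24 good_22_25 good_22_26 good_22_27 good_22_28 good_23_0 good_23_1 good_23_2 good_23_3 good_23_4 good_23_5 good_23_6 good_23_7 good_23_8 good_23_9 good_23_10 good_23_11 good_23_12 good_23_13 good_23_14 good_23_15 good_23_16 good_23_17 good_23_18 good_23_19 good_23_20 good_23_21 good_23_22 good_23_23 good_23_24 good_23_25 good_23_26 good_23_27 good_23_28 good_24_0 good_24_1 good_24_2 good_24_3 good_24_4 good_24_5 good_24_6 good_24_7 good_24_8 good_24_9 good_24_10 good_24_11 good_24_12 good_24_13 good_24_14 good_24_15 good_24_16 good_24_17 good_24_18 good_24_19 good_24_20 good_24_21 good_24_22 good_24_23 good_24_24 good_24_25 good_24_26 good_24_27 good_24_28 good_25_0 good_25_1 good_25_2 good_25_3 good_25_4 good_25_5 good_25_6 good_25_7 good_25_8 good_25_9 good_25_10 good_25_11 good_25_12 good_25_13 good_25_14 good_25_15 good_25_16 good_25_17 good_25_18 good_25_19 good_25_20 good_25_21 good_25_22 good_25_23 good_25_24 good_25_25 good_25_26 good_25_27 good_25_28 good_26_0 good_26_1 good_26_2 good_26_3 good_26_4 good_26_5 good_26_6 good_26_7 good_26_8 good_26_9 good_26_10 good_26_11 good_26_12 good_26_13 good_26_14 good_26_15 good_26_16 good_26_17 good_26_18 good_26_19 good_26_20 good_26_21 good_26_22 good_26_23 good_26_24 good_26_25 good_26_26 good_26_27 good_26_28 good_27_0 good_27_1 good_27_2 good_27_3 good_27_4 good_27_5 good_27_6 good_27_7 good_27_8 good_27_9 good_27_10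 good_27_11 good_27_12 good_27_13 good_27_14 good_27_15 good_27_16 good_27_17 good_27_18 good_27_19 good_27_20 good_27_21 good_27_22 good_27_23 good_27_24 good_27_25 good_27_26 good_27_27 good_27_28 good_28_0 good_28_1 good_28_2 good_28_3 good_28_4 good_28_5 good_28_6 good_28_7 good_28_8 good_28_9 good_28_10 good_28_11 good_28_12 good_28_13 good_28_14 good_28_15 good_28_16 good_28_17 good_28_18 good_28_19 good_28_20 good_28_21 good_28_22 good_28_23 good_28_24 good_28_25 good_28_26 good_28_27 good_28_28
lemma good_all: "i < 29 \<Longrightarrow> k < 29 \<Longrightarrow> good i k"
proof -
  assume "i < 29" "k < 29"
  then have "i \<in> set [0..<29]" "k \<in> set [0..<29]" by auto
  then show ?thesis unfolding up29 using goods by auto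
qed
definition v3 :: "'a::field \<Rightarrow> 'a \<Rightarrow> 'a \<Rightarrow> 'a ^ 3" where
  "v3 x y z = vector [x, y, z]"

lemma v3_nth [simp]: "v3 x y z $ 1 = x" "v3 x y z $ 2 = y" "v3 x y z $ 3 = z"
  unfolding v3_def by simp_all

lemma vec3_eq_iff: "(p::'a::field^3) = q \<longleftrightarrow> p$1 = q$1 \<and> p$2 = q$2 \<and> p$3 = q$3"
  by (simp add: vec_eq_iff forall_3)

lemma v3_eq [simp]: "v3 a b c = v3 x y z \<longleftrightarrow> a = x \<and> b = y \<and> c = z"
  by (simp add: vec3_eq_iff)

definition dot :: "'a::field ^ 3 \<Rightarrow> 'a ^ 3 \<Rightarrow> 'a" where
  "dot a p = a$1 * p$1 + a$2 * p$2 + a$3 * p$3"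

definition Kset :: "'a::field ^ 3 \<Rightarrow> ('a ^ 3) set" where
  "Kset a = {x. dot a x = 0}"

lemma dot_v3 [simp]: "dot a (v3 x y z) = a$1 * x + a$2 * y + a$3 * z"
  by (simp add: dot_def)

lemma dot_scale: "dot a (c *s p) = c * dot a p"
  by (simp add: dot_def algebra_simps)

lemma dot_add: "dot a (p + q) = dot a p + dot a q"
  by (simp add: dot_def algebra_simps)

lemma dot_zero: "dot a 0 = 0"
  by (simp add: dot_def)

lemma Kset_subspace: "vec.subspace (Kset a)"
  unfolding vec.subspace_def Kset_def mem_Collect_eq by (simp add: dot_add dot_scale dot_zero)

lemma nonzero_coord: "(a::'a::field^3) \<noteq> 0 \<Longrightarrow> a$1 \<noteq> 0 \<or> a$2 \<noteq> 0 \<or> a$3 \<noteq> 0"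
  by (auto simp: vec3_eq_iff)


lemma Kset_dim_le2:
  assumes "(a::'a::field^3) \<noteq> 0"
  shows "vec.dim (Kset a) \<le> 2"
proof -
  have le: "vec.dim (Kset a) \<le> 3"
    using vec.dim_subset_UNIV[of "Kset a"] by (simp add: vec.dimension_def card_cart_basis)
  have "vec.dim (Kset a) \<noteq> 3"
  proof
    assume "vec.dim (Kset a) = 3"
    then have "vec.span (Kset a) = UNIV"
      using vec.dim_eq_full[of "Kset a"] by (simp add: vec.dimension_def card_cart_basis)
    moreover have "vec.span (Kset a) = Kset a" using Kset_subspace[of a] vec.span_eq_iff by blast
    ultimately have U: "Kset a = UNIV" by simp
    from nonzero_coord[OF assms] show False
    proof (elim disjE)
      assume "a$1 \<noteq> 0"
      moreover have "v3 1 0 0 \<in> Kset a" using U by simp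
      ultimately show False by (simp add: Kset_def)
    next
      assume "a$2 \<noteq> 0"
      moreover have "v3 0 1 0 \<in> Kset a" using U by simp
      ultimately show False by (simp add: Kset_def)
    next
      assume "a$3 \<noteq> 0"
      moreover have "v3 0 0 1 \<in> Kset a" using U by simp
      ultimately show False by (simp add: Kset_def)
    qed
  qed
  with le show ?thesis by simp
qed

definition cross :: "'a::field ^ 3 \<Rightarrow> 'a ^ 3 \<Rightarrow> 'a ^ 3" where
  "cross u v = v3 (u$2 * v$3 - u$3 * v$2) (u$3 * v$1 - u$1 * v$3) (u$1 * v$2 - u$2 * v$1)"

lemma cross_zero_dep:
  fixes u v :: "'a::field ^ 3"
  assumes z: "cross u v = 0" and uv: "u \<noteq> v"
  shows "vec.dependent {u, v}"
proof (cases "u = 0")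
  case True
  then show ?thesis by (simp add: vec.dependent_zero)
next
  case False
  have e1: "u$2 * v$3 = u$3 * v$2" and e2: "u$3 * v$1 = u$1 * v$3" and e3: "u$1 * v$2 = u$2 * v$1"
    using z by (simp_all add: cross_def vec3_eq_iff)
  have "\<exists>c. v = c *s u"
  proof -
    from nonzero_coord[OF False] show ?thesis
    proof (elim disjE)
      assume h: "u$1 \<noteq> 0"
      show ?thesis
        by (rule exI[of _ "v$1 / u$1"]) (use h e2 e3 in \<open>simp add: vec3_eq_iff field_simps\<close>)
    next
      assume h: "u$2 \<noteq> 0"
      show ?thesis
        by (rule exI[of _ "v$2 / u$2"]) (use h e1 e3 in \<open>simp add: vec3_eq_iff field_simps\<close>)
    next
      assume h: "u$3 \<noteq> 0"
      show ?thesis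
        by (rule exI[of _ "v$3 / u$3"]) (use h e1 e2 in \<open>simp add: vec3_eq_iff field_simps\<close>)
    qed
  qed
  then obtain c where c: "v = c *s u" by blast
  have "v \<in> vec.span ({u, v} - {v})"
    using uv c by (simp add: vec.span_scale vec.span_base insert_Diff_if)
  then show ?thesis unfolding vec.dependent_def by blast
qed

lemma lines_char:
  assumes "(L :: ('a::field ^ 3) set) \<in> pg_lines"
  shows "\<exists>a. a \<noteq> 0 \<and> L = Kset a"
proof -
  have sL: "vec.subspace L" and dL: "vec.dim L = 2" using assms by (auto simp: pg_lines_def)
  obtain B where B: "B \<subseteq> L" "vec.independent B" "L \<subseteq> vec.span B" "card B = vec.dim L"
    using vec.basis_exists by blast
  then obtain u v where uv: "B = {u, v}" "u \<noteq> v" using dL by (auto simp: card_2_iff)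
  define a where "a = cross u v"
  have a0: "a \<noteq> 0"
  proof
    assume "a = 0"
    then have "vec.dependent {u, v}" using cross_zero_dep[OF _ uv(2)] a_def by simp
    then show False using B(2) uv(1) by simp
  qed
  have "{u, v} \<subseteq> Kset a"
    by (auto simp: Kset_def a_def cross_def dot_def algebra_simps)
  then have "vec.span B \<subseteq> Kset a" using uv(1) vec.span_minimal Kset_subspace by blast
  with B(3) have sub: "L \<subseteq> Kset a" by blast
  have "L = Kset a"
    by (rule vec.subspace_dim_equal[OF sL Kset_subspace sub]) (use Kset_dim_le2[OF a0] dL in simp)
  with a0 show ?thesis by blast
qed

lemma span_in_Kset: "vec.span {p} \<subseteq> Kset a \<longleftrightarrow> dot a p = 0"
proof
  assume "vec.span {p} \<subseteq> Kset a"
  then show "dot a p = 0" using vec.span_base[of p "{p}"] by (auto simp: Kset_def)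
next
  assume "dot a p = 0"
  then show "vec.span {p} \<subseteq> Kset a"
    by (intro vec.span_minimal Kset_subspace) (auto simp: Kset_def)
qed

lemma span_point: "(p::'a::field^3) \<noteq> 0 \<Longrightarrow> vec.span {p} \<in> pg_points"
  by (simp add: pg_points_def)

definition nrm :: "'a::field ^ 3 \<Rightarrow> bool" where
  "nrm v \<longleftrightarrow> v$3 = 1 \<or> (v$3 = 0 \<and> v$2 = 1) \<or> (v$3 = 0 \<and> v$2 = 0 \<and> v$1 = 1)"

lemma nrm_scale:
  fixes p q :: "'a::field ^ 3"
  assumes "nrm p" "nrm q" "p = c *s q"
  shows "p = q"
proof -
  have c: "p$1 = c * q$1" "p$2 = c * q$2" "p$3 = c * q$3" using assms(3) by simp_all
  have "c = 1" using assms(1,2) c unfolding nrm_def by auto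
  then show ?thesis using assms(3) by simp
qed

lemma nrm_nonzero: "nrm p \<Longrightarrow> p \<noteq> 0"
  by (auto simp: nrm_def)

lemma span_inj:
  assumes "\<forall>p\<in>A. nrm (p::'a::field^3)"
  shows "inj_on (\<lambda>p. vec.span {p}) A"
proof (rule inj_onI)
  fix p q assume pq: "p \<in> A" "q \<in> A" "vec.span {p} = vec.span {q}"
  then have "p \<in> vec.span {q}" using vec.span_base[of p "{p}"] by simp
  then obtain c where "p = c *s q" by (auto simp: vec.span_singleton)
  then show "p = q" using nrm_scale assms pq by blast
qed
lemma Krow_sub: "Krow j \<subseteq> {..<29}"
  by (simp add: Krow_def)

lemma Krow_card: "j < 29 \<Longrightarrow> 5 \<le> card (Krow j)"
proof -
  assume "j < 29"
  then have "j \<in> set [0..<29]" by simp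
  then show ?thesis unfolding up29 by (auto simp: Krow_simps)
qed

lemma Krow3_card: "card (Krow 3) = 5"
  by (simp add: Krow_simps)

lemma Kinf_card: "card Kinf = 6" "Kinf \<subseteq> {..<29}"
  by (simp_all add: Kinf_def)

lemma card_compl29: "A \<subseteq> {..<(29::nat)} \<Longrightarrow> card {x. x < 29 \<and> x \<notin> A} = 29 - card A"
proof -
  assume A: "A \<subseteq> {..<(29::nat)}"
  have "{x. x < 29 \<and> x \<notin> A} = {..<29} - A" by auto
  then show ?thesis using card_Diff_subset[OF finite_subset[OF A] A] by simp
qed

lemma card_split29:
  "card {j. j < (29::nat) \<and> \<not> P j} + card {j. j < 29 \<and> P j} = 29"
proof -
  have "{j. j < (29::nat) \<and> \<not> P j} \<union> {j. j < 29 \<and> P j} = {..<29}" by auto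
  moreover have "{j. j < (29::nat) \<and> \<not> P j} \<inter> {j. j < 29 \<and> P j} = {}" by auto
  ultimately show ?thesis using card_Un_disjoint[of "{j. j < (29::nat) \<and> \<not> P j}" "{j. j < 29 \<and> P j}"]
    by simp
qed

section \<open>Field facts\<close>

lemma of_nat_29_zero:
  assumes c: "CARD('a::{finite,field}) = 29"
  shows "(of_nat 29 :: 'a) = 0"
proof -
  have inj: "inj ((+) (1::'a))" by (auto intro: injI)
  have surj: "surj ((+) (1::'a))"
    by (rule surjI[where f="\<lambda>y. y - 1"]) simp
  have "(\<Sum>y\<in>UNIV. y) = sum (\<lambda>y. y) (range ((+) (1::'a)))" using surj by simp
  also have "\<dots> = (\<Sum>y\<in>UNIV. (1::'a) + y)" by (subst sum.reindex[OF inj]) simp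
  finally have "(\<Sum>y\<in>UNIV. (1::'a) + y) = (\<Sum>y\<in>UNIV. y)" by simp
  then have "of_nat (card (UNIV::'a set)) + (\<Sum>y\<in>UNIV. y) = (\<Sum>y\<in>UNIV. (y::'a))"
    by (simp add: sum.distrib)
  then show ?thesis using c by simp
qed

lemma of_nat_mod29:
  assumes c: "CARD('a::{finite,field}) = 29"
  shows "(of_nat n :: 'a) = of_nat (n mod 29)"
proof -
  have "(of_nat n :: 'a) = of_nat (29 * (n div 29) + n mod 29)" by (simp only: mult_div_mod_eq)
  also have "\<dots> = of_nat 29 * of_nat (n div 29) + of_nat (n mod 29)"
    by (simp only: of_nat_add of_nat_mult)
  finally have "(of_nat n :: 'a) = of_nat 29 * of_nat (n div 29) + of_nat (n mod 29)" .
  then show ?thesis using of_nat_29_zero[OF c] by simp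
qed

lemma pow28_mod: "0 < (d::nat) \<Longrightarrow> d < 29 \<Longrightarrow> d ^ 28 mod 29 = 1"
proof -
  assume "0 < d" "d < 29"
  then have "d \<in> set [0..<29]" "d \<noteq> 0" by auto
  then show ?thesis unfolding up29 by auto
qed

lemma of_nat_nz29:
  assumes c: "CARD('a::{finite,field}) = 29" and d: "0 < d" "d < 29"
  shows "(of_nat d :: 'a) \<noteq> 0"
proof
  assume z: "(of_nat d :: 'a) = 0"
  have "(of_nat (d ^ 28) :: 'a) = of_nat d ^ 28" by simp
  also have "\<dots> = 0" using z by simp
  finally have "(of_nat (d ^ 28) :: 'a) = 0" .
  moreover have "(of_nat (d ^ 28) :: 'a) = of_nat (d ^ 28 mod 29)" by (rule of_nat_mod29[OF c])
  moreover have "d ^ 28 mod 29 = 1" using pow28_mod d by blast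
  ultimately show False by simp
qed

lemma phi_eq:
  assumes c: "CARD('a::{finite,field}) = 29" and ab: "a < 29" "b < 29"
  shows "(of_nat a :: 'a) = of_nat b \<longleftrightarrow> a = b"
proof
  assume e: "(of_nat a :: 'a) = of_nat b"
  show "a = b"
  proof (rule ccontr)
    assume "a \<noteq> b"
    then consider "a < b" | "b < a" by linarith
    then show False
    proof cases
      case 1
      have "(of_nat b :: 'a) = of_nat a + of_nat (b - a)" using 1 by (simp flip: of_nat_add)
      then have z: "(of_nat (b - a) :: 'a) = 0" using e by simp
      have "0 < b - a" "b - a < 29" using 1 ab by auto
      then show False using of_nat_nz29[OF c] z by blast
    next
      case 2
      have "(of_nat a :: 'a) = of_nat b + of_nat (a - b)" using 2 by (simp flip: of_nat_add)
      then have z: "(of_nat (a - b) :: 'a) = 0" using e by simp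
      have "0 < a - b" "a - b < 29" using 2 ab by auto
      then show False using of_nat_nz29[OF c] z by blast
    qed
  qed
qed simp

lemma phi_surj:
  assumes c: "CARD('a::{finite,field}) = 29"
  shows "\<exists>n<29. (of_nat n :: 'a) = x"
proof -
  have inj: "inj_on (of_nat :: nat \<Rightarrow> 'a) {..<29}"
    by (rule inj_onI) (use phi_eq[OF c] in auto)
  have "card ((of_nat :: nat \<Rightarrow> 'a) ` {..<29}) = 29" using card_image[OF inj] by simp
  then have "(of_nat :: nat \<Rightarrow> 'a) ` {..<29} = UNIV"
    using c by (simp add: card_subset_eq)
  then show ?thesis by (metis UNIV_I imageE lessThan_iff)
qed

lemma phi_lin:
  assumes c: "CARD('a::{finite,field}) = 29"
  shows "(of_nat i :: 'a) * of_nat j + of_nat k = of_nat ((i * j + k) mod 29)"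
  using of_nat_mod29[OF c, of "i * j + k"] by simp
section \<open>The arc\<close>

definition arcA :: "('a::field ^ 3) set" where
  "arcA = {v3 (of_nat x) (of_nat j) 1 | x j. j < 29 \<and> x < 29 \<and> x \<notin> Krow j}
        \<union> {v3 (of_nat x) 1 0 | x. x < 29 \<and> x \<notin> Kinf} \<union> {v3 1 0 0}"

lemma arcA_nrm: "\<forall>p\<in>(arcA :: ('a::field ^ 3) set). nrm p"
  by (auto simp: arcA_def nrm_def)

lemma count_le:
  assumes c: "CARD('a::{finite,field}) = 29" and a0: "(a :: 'a ^ 3) \<noteq> 0"
  shows "card {p\<in>arcA. dot a p = 0} \<le> 25"
proof (cases "a$1 = 0")
  case False
  obtain i where i: "i < 29" "(of_nat i :: 'a) = - (a$2) / a$1" using phi_surj[OF c] by blast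
  obtain k where k: "k < 29" "(of_nat k :: 'a) = - (a$3) / a$1" using phi_surj[OF c] by blast
  define S where "S = {j. j < 29 \<and> (i*j+k) mod 29 \<notin> Krow j}"
  define f where "f = (\<lambda>j. v3 (of_nat ((i*j+k) mod 29)) (of_nat j) (1::'a))"
  define E where "E = (if i \<in> Kinf then {} else {v3 (of_nat i) 1 (0::'a)})"
  have sub: "{p\<in>arcA. dot a p = 0} \<subseteq> f ` S \<union> E"
  proof
    fix p assume p: "p \<in> {p\<in>arcA. dot a p = 0}"
    then have d: "dot a p = 0" and pA: "p \<in> arcA" by auto
    from pA consider (aff) x j where "p = v3 (of_nat x) (of_nat j) 1" "j < 29" "x < 29" "x \<notin> Krow j"
      | (inf) x where "p = v3 (of_nat x) 1 0" "x < 29" "x \<notin> Kinf"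
      | (o) "p = v3 1 0 0"
      unfolding arcA_def by blast
    then show "p \<in> f ` S \<union> E"
    proof cases
      case aff
      have "a$1 * of_nat x + a$2 * of_nat j + a$3 = 0" using d aff by simp
      then have "(of_nat x :: 'a) = (- (a$2) / a$1) * of_nat j + (- (a$3) / a$1)"
        using False by (simp add: field_simps) (metis add.assoc add_eq_0_iff mult.commute)
      then have "(of_nat x :: 'a) = of_nat i * of_nat j + of_nat k" unfolding i(2) k(2) .
      then have "(of_nat x :: 'a) = of_nat ((i*j+k) mod 29)" using phi_lin[OF c, of i j k] by simp
      then have "x = (i*j+k) mod 29" using phi_eq[OF c] aff by simp
      then show ?thesis using aff unfolding S_def f_def by auto
    next
      case inf
      have "a$1 * of_nat x + a$2 = 0" using d inf by simp
      then have "(of_nat x :: 'a) = - (a$2) / a$1"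
        using False by (simp add: field_simps) (metis add_eq_0_iff mult.commute)
      then have "(of_nat x :: 'a) = of_nat i" using i(2) by simp
      then have "x = i" using phi_eq[OF c inf(2) i(1)] by simp
      then show ?thesis using inf unfolding E_def by auto
    next
      case o
      then show ?thesis using d False by simp
    qed
  qed
  have "card {p\<in>arcA. dot a p = 0} \<le> card (f ` S \<union> E)"
    by (rule card_mono[OF _ sub]) (simp add: E_def)
  also have "\<dots> \<le> card (f ` S) + card E" by (rule card_Un_le)
  also have "\<dots> \<le> card S + card E" using card_image_le[of S f] by (simp add: S_def)
  also have "\<dots> \<le> 25"
  proof -
    have g: "good i k" using good_all i(1) k(1) by blast
    have "card S + card {j. j < 29 \<and> (i*j+k) mod 29 \<in> Krow j} = 29"
      unfolding S_def by (rule card_split29)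
    then show ?thesis using g unfolding good_def E_def by (auto split: if_splits)
  qed
  finally show ?thesis .
next
  case a1: True
  show ?thesis
  proof (cases "a$2 = 0")
    case False
    obtain j0 where j0: "j0 < 29" "(of_nat j0 :: 'a) = - (a$3) / a$2" using phi_surj[OF c] by blast
    define f where "f = (\<lambda>x. v3 (of_nat x) (of_nat j0) (1::'a))"
    define S where "S = {x. x < 29 \<and> x \<notin> Krow j0}"
    have sub: "{p\<in>arcA. dot a p = 0} \<subseteq> f ` S \<union> {v3 1 0 0}"
    proof
      fix p assume p: "p \<in> {p\<in>arcA. dot a p = 0}"
      then have d: "dot a p = 0" and pA: "p \<in> arcA" by auto
      from pA consider (aff) x j where "p = v3 (of_nat x) (of_nat j) 1" "j < 29" "x < 29" "x \<notin> Krow j"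
        | (inf) x where "p = v3 (of_nat x) 1 0" "x < 29" "x \<notin> Kinf"
        | (o) "p = v3 1 0 0"
        unfolding arcA_def by blast
      then show "p \<in> f ` S \<union> {v3 1 0 0}"
      proof cases
        case aff
        have "a$2 * of_nat j + a$3 = 0" using d aff a1 by simp
        then have "(of_nat j :: 'a) = - (a$3) / a$2"
          using False by (simp add: field_simps) (metis add_eq_0_iff mult.commute)
        then have "(of_nat j :: 'a) = of_nat j0" using j0(2) by simp
        then have "j = j0" using phi_eq[OF c aff(2) j0(1)] by simp
        then show ?thesis using aff unfolding S_def f_def by auto
      next
        case inf
        then show ?thesis using d a1 False by simp
      qed simp
    qed
    have "card {p\<in>arcA. dot a p = 0} \<le> card (f ` S \<union> {v3 1 0 0})"
      by (rule card_mono[OF _ sub]) simp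
    also have "\<dots> \<le> card (f ` S) + 1" using card_Un_le[of "f ` S" "{v3 1 0 0}"] by simp
    also have "\<dots> \<le> card S + 1" using card_image_le[of S f] by (simp add: S_def)
    also have "\<dots> \<le> 25"
      using card_compl29[OF Krow_sub[of j0]] Krow_card[OF j0(1)] unfolding S_def by simp
    finally show ?thesis .
  next
    case a2: True
    have a3: "a$3 \<noteq> 0" using nonzero_coord[OF a0] a1 a2 by simp
    define f where "f = (\<lambda>x. v3 (of_nat x) 1 (0::'a))"
    define S where "S = {x. x < 29 \<and> x \<notin> Kinf}"
    have sub: "{p\<in>arcA. dot a p = 0} \<subseteq> f ` S \<union> {v3 1 0 0}"
    proof
      fix p assume p: "p \<in> {p\<in>arcA. dot a p = 0}"
      then have d: "dot a p = 0" and pA: "p \<in> arcA" by auto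
      from pA consider (aff) x j where "p = v3 (of_nat x) (of_nat j) 1" "j < 29" "x < 29" "x \<notin> Krow j"
        | (inf) x where "p = v3 (of_nat x) 1 0" "x < 29" "x \<notin> Kinf"
        | (o) "p = v3 1 0 0"
        unfolding arcA_def by blast
      then show "p \<in> f ` S \<union> {v3 1 0 0}"
      proof cases
        case aff
        then show ?thesis using d a1 a2 a3 by simp
      next
        case inf
        then show ?thesis unfolding S_def f_def by auto
      qed simp
    qed
    have "card {p\<in>arcA. dot a p = 0} \<le> card (f ` S \<union> {v3 1 0 0})"
      by (rule card_mono[OF _ sub]) simp
    also have "\<dots> \<le> card (f ` S) + 1" using card_Un_le[of "f ` S" "{v3 1 0 0}"] by simp
    also have "\<dots> \<le> card S + 1" using card_image_le[of S f] by (simp add: S_def)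
    also have "\<dots> \<le> 25"
      using card_compl29[OF Kinf_card(2)] Kinf_card(1) unfolding S_def by simp
    finally show ?thesis .
  qed
qed

definition a0line :: "'a::field ^ 3" where "a0line = v3 0 1 (- of_nat 3)"

lemma count_eq25:
  assumes c: "CARD('a::{finite,field}) = 29"
  shows "card {p\<in>(arcA :: ('a ^ 3) set). dot a0line p = 0} = 25"
proof (rule antisym)
  show "card {p\<in>(arcA :: ('a ^ 3) set). dot a0line p = 0} \<le> 25"
    by (rule count_le[OF c]) (simp add: a0line_def vec3_eq_iff)
next
  define f where "f = (\<lambda>x. v3 (of_nat x) (of_nat 3) (1::'a))"
  define S where "S = {x. x < 29 \<and> x \<notin> Krow 3}"
  have sub: "f ` S \<union> {v3 1 0 0} \<subseteq> {p\<in>(arcA :: ('a ^ 3) set). dot a0line p = 0}"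
    unfolding f_def S_def arcA_def a0line_def by force
  have inj: "inj_on f S"
    by (rule inj_onI) (auto simp: f_def S_def phi_eq[OF c])
  have disj: "v3 1 0 0 \<notin> f ` S" by (auto simp: f_def)
  have cS: "card S = 24" using card_compl29[OF Krow_sub[of 3]] Krow3_card unfolding S_def by simp
  have "card (f ` S \<union> {v3 1 0 0}) = 25"
    using disj card_image[OF inj] cS by (simp add: S_def)
  moreover have "finite {p\<in>(arcA :: ('a ^ 3) set). dot a0line p = 0}" by simp
  ultimately show "25 \<le> card {p\<in>(arcA :: ('a ^ 3) set). dot a0line p = 0}"
    using card_mono[OF _ sub] by simp
qed
lemma arcA_card:
  assumes c: "CARD('a::{finite,field}) = 29"
  shows "card (arcA :: ('a ^ 3) set) = 697"
proof -
  define f1 where "f1 = (\<lambda>(j,x). v3 (of_nat x) (of_nat j) (1::'a))"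
  define S1 where "S1 = (SIGMA j:{..<29::nat}. {x. x < 29 \<and> x \<notin> Krow j})"
  define f2 where "f2 = (\<lambda>x. v3 (of_nat x) 1 (0::'a))"
  define S2 where "S2 = {x::nat. x < 29 \<and> x \<notin> Kinf}"
  have eq: "(arcA :: ('a ^ 3) set) = (f1 ` S1 \<union> f2 ` S2) \<union> {v3 1 0 0}"
    unfolding arcA_def f1_def S1_def f2_def S2_def by force
  have inj1: "inj_on f1 S1"
    by (rule inj_onI) (auto simp: f1_def S1_def phi_eq[OF c])
  have inj2: "inj_on f2 S2"
    by (rule inj_onI) (auto simp: f2_def S2_def phi_eq[OF c])
  have "card S1 = (\<Sum>j<29. card {x. x < 29 \<and> x \<notin> Krow j})"
    unfolding S1_def by (rule card_SigmaI) auto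
  also have "\<dots> = (\<Sum>j<29. 29 - card (Krow j))"
    using card_compl29[OF Krow_sub] by simp
  also have "\<dots> = sum_list (map (\<lambda>j. 29 - card (Krow j)) [0..<29])"
    by (simp add: interv_sum_list_conv_sum_set_nat lessThan_atLeast0)
  also have "\<dots> = 673"
    unfolding up29 by (simp add: Krow_simps)
  finally have c1: "card S1 = 673" .
  have c2: "card S2 = 23" using card_compl29[OF Kinf_card(2)] Kinf_card(1) unfolding S2_def by simp
  have d1: "f1 ` S1 \<inter> f2 ` S2 = {}" by (auto simp: f1_def f2_def)
  have d2: "v3 1 0 0 \<notin> f1 ` S1 \<union> f2 ` S2" by (auto simp: f1_def f2_def)
  have fin1: "finite S1" unfolding S1_def by auto
  have fin2: "finite S2" unfolding S2_def by auto
  have "card (f1 ` S1 \<union> f2 ` S2) = 696"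
    using card_Un_disjoint[OF finite_imageI[OF fin1] finite_imageI[OF fin2] d1]
      card_image[OF inj1] card_image[OF inj2] c1 c2 by simp
  then show ?thesis unfolding eq using d2 by simp
qed

lemma a0line_line:
  shows "Kset (a0line :: 'a::field ^ 3) \<in> pg_lines"
proof -
  define u where "u = (v3 1 0 0 :: 'a ^ 3)"
  define v where "v = (v3 0 (of_nat 3) 1 :: 'a ^ 3)"
  have "Kset a0line = vec.span {u, v}"
  proof
    show "vec.span {u, v} \<subseteq> Kset a0line"
      by (rule vec.span_minimal[OF _ Kset_subspace]) (auto simp: Kset_def u_def v_def a0line_def)
  next
    show "Kset a0line \<subseteq> vec.span {u, v}"
    proof
      fix x :: "'a ^ 3" assume "x \<in> Kset a0line"
      then have x2: "x$2 = of_nat 3 * x$3" by (simp add: Kset_def dot_def a0line_def)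
      have "x = x$1 *s u + x$3 *s v"
        using x2 by (simp add: vec3_eq_iff u_def v_def)
      moreover have "x$1 *s u + x$3 *s v \<in> vec.span {u, v}"
        by (intro vec.span_add vec.span_scale vec.span_base) auto
      ultimately show "x \<in> vec.span {u, v}" by simp
    qed
  qed
  moreover have "u \<notin> vec.span {v}"
  proof
    assume "u \<in> vec.span {v}"
    then obtain c where "u = c *s v" by (auto simp: vec.span_singleton)
    then have "u$3 = c * v$3" "u$1 = c * v$1" by simp_all
    then show False by (simp add: u_def v_def)
  qed
  moreover have "v \<noteq> 0" by (simp add: v_def vec3_eq_iff)
  ultimately have "vec.dim (Kset (a0line :: 'a ^ 3)) = 2"
    by (simp add: vec.dim_insert)
  then show ?thesis using Kset_subspace by (simp add: pg_lines_def)
qed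

theorem mainTheorem15:
  assumes "CARD('a::{finite,field}) = 29"
  shows "(\<exists>B :: ('a ^ 3) set set. is_arc 697 25 B) \<and> 697 \<le> m_arc TYPE('a) 25"
proof -
  note c = assms
  define B where "B = (\<lambda>p. vec.span {p}) ` (arcA :: ('a ^ 3) set)"
  have inj: "inj_on (\<lambda>p. vec.span {p}) (arcA :: ('a ^ 3) set)"
    by (rule span_inj[OF arcA_nrm])
  have cardB: "card B = 697" unfolding B_def using card_image[OF inj] arcA_card[OF c] by simp
  have Bpts: "B \<subseteq> pg_points"
    unfolding B_def using arcA_nrm nrm_nonzero span_point by blast
  have cnt: "card {P\<in>B. P \<subseteq> Kset a} = card {p\<in>(arcA :: ('a ^ 3) set). dot a p = 0}" for a
  proof -
    have "{P\<in>B. P \<subseteq> Kset a} = (\<lambda>p. vec.span {p}) ` {p\<in>arcA. dot a p = 0}"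
      unfolding B_def using span_in_Kset by blast
    moreover have "inj_on (\<lambda>p. vec.span {p}) {p\<in>(arcA :: ('a ^ 3) set). dot a p = 0}"
      using inj by (rule inj_on_subset) blast
    ultimately show ?thesis by (simp add: card_image)
  qed
  have le: "\<forall>L\<in>pg_lines. card {P\<in>B. P \<subseteq> L} \<le> 25"
  proof
    fix L :: "('a ^ 3) set" assume "L \<in> pg_lines"
    then obtain a where a: "a \<noteq> 0" "L = Kset a" using lines_char by blast
    show "card {P\<in>B. P \<subseteq> L} \<le> 25" using cnt[of a] count_le[OF c a(1)] a(2) by simp
  qed
  have ex: "\<exists>L\<in>pg_lines. card {P\<in>B. P \<subseteq> L} = 25"
    using a0line_line cnt[of a0line] count_eq25[OF c] by metis
  have arc: "is_arc 697 25 B"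
    unfolding is_arc_def using Bpts cardB le ex by (simp add: B_def)
  have fin: "finite {n. \<exists>B :: ('a ^ 3) set set. is_arc n 25 B}"
  proof (rule finite_subset)
    show "{n. \<exists>B :: ('a ^ 3) set set. is_arc n 25 B} \<subseteq> {..card (UNIV :: ('a ^ 3) set set)}"
    proof
      fix n assume "n \<in> {n. \<exists>B :: ('a ^ 3) set set. is_arc n 25 B}"
      then obtain B' :: "('a ^ 3) set set" where "is_arc n 25 B'" by blast
      then have "n = card B'" by (simp add: is_arc_def)
      moreover have "card B' \<le> card (UNIV :: ('a ^ 3) set set)" by (rule card_mono) auto
      ultimately show "n \<in> {..card (UNIV :: ('a ^ 3) set set)}" by simp
    qed
  qed simp
  have "697 \<le> m_arc TYPE('a) 25"
    unfolding m_arc_def using fin arc by (auto intro: Max_ge)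
  with arc show ?thesis by blast
qed
end
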